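(* Let $2\le n\le\kappa+1$ and $\ell=\binom{\kappa}{n-1}$. Let $B$ and $D$ be the matrices constructed below. Then the rows of $$D=\left[B,\,-B\ltimes W_{[\kappa^0,\kappa]}\ltimes W_{[\kappa,\kappa]},\,-B\ltimes W_{[\kappa,\kappa]}\ltimes W_{[\kappa,\kappa^2]},\,\dots,\,-B\ltimes W_{[\kappa^{n-2},\kappa]}\ltimes W_{[\kappa,\kappa^{n-1}]}\right]\in\mathbb R^{\kappa\ell\times n\kappa^n}$$ form a basis of the subspace $\mathcal K_{[n;\kappa]}\subseteq\mathbb R^{n\kappa^n}$ of (structure vectors of) skew-symmetric games.
   Context: Semi-tensor product: for $A\in\mathbb R^{m\times n}$, $B\in\mathbb R^{p\times q}$ and $t=\mathrm{lcm}(n,p)$, $A\ltimes B=(A\otimes I_{t/n})(B\otimes I_{t/p})$; associative, equal to the Kronecker product on column vectors. Swap matrix $W_{[m,n]}\in\mathbb R^{mn\times mn}$: the permutation matrix with $W_{[m,n]}(X\otimes Y)=Y\otimes X$ for $X\in\mathbb R^m,Y\in\mathbb R^n$ ($W_{[1,n]}=I_n$). $\delta_\kappa^j$ is the $j$-th column of $I_\kappa$. Construction: let $z^1,\dots,z^\ell$ be the strictly increasing tuples $(z_1<\dots<z_{n-1})$ with entries in $\{1,\dots,\kappa\}$, listed in lexicographic order. For $i=1,\dots,\ell$, $j=1,\dots,\kappa$ define the row vector $\eta^i_j\in\mathbb R^{\kappa^n}$ by $(\eta^i_j)^T=\delta_\kappa^j\otimes\sum_{\sigma\in\mathbf S_{n-1}}\mathrm{sgn}(\sigma)\,\delta_\kappa^{z^i_{\sigma(1)}}\otimes\cdots\otimes\delta_\kappa^{z^i_{\sigma(n-1)}}$,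 and let $B\in\mathbb R^{\kappa\ell\times\kappa^n}$ have rows $\eta^1_1,\dots,\eta^1_\kappa,\dots,\eta^\ell_1,\dots,\eta^\ell_\kappa$ in this order. Games: $G\in\mathcal G_{[n;\kappa]}$ has players $\{1,\dots,n\}$, each with strategies $\{1,\dots,\kappa\}$ (strategy $j$ identified with $\delta_\kappa^j$) and payoffs $c_i$; $V_i^c\in\mathbb R^{\kappa^n}$ is the row vector with $c_i(x_1,\dots,x_n)=V_i^c(x_1\otimes\cdots\otimes x_n)$, and $V_G=[V_1^c,\dots,V_n^c]\in\mathbb R^{n\kappa^n}$ identifies $\mathcal G_{[n;\kappa]}$ with $\mathbb R^{n\kappa^n}$. $G$ is skew-symmetric if for all $\sigma\in\mathbf S_n$, all $i$ and all profiles, $c_i(x_1,\dots,x_n)=\mathrm{sgn}(\sigma)c_{\sigma(i)}(x_{\sigma^{-1}(1)},\dots,x_{\sigma^{-1}(n)})$; $\mathcal K_{[n;\kappa]}$ is the subspace of their structure vectors. *)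

theory Defs
  imports "Jordan_Normal_Form.Matrix" "HOL-Combinatorics.Permutations" "HOL-Library.List_Lexorder"
begin

definition kron_mat :: "real mat \<Rightarrow> real mat \<Rightarrow> real mat" where
  "kron_mat A B = mat (dim_row A * dim_row B) (dim_col A * dim_col B)
     (\<lambda>(i,j). A $$ (i div dim_row B, j div dim_col B) * B $$ (i mod dim_row B, j mod dim_col B))"

definition stp :: "real mat \<Rightarrow> real mat \<Rightarrow> real mat" where
  "stp A B = (let n = dim_col A; p = dim_row B; t = lcm n p in
      kron_mat A (1\<^sub>m (t div n)) * kron_mat B (1\<^sub>m (t div p)))"

text \<open>Swap matrix W_[m,n]: the mn x mn permutation matrix with W (X \<otimes> Y) = Y \<otimes> X.
  (0-based: entry i*n+j of X \<otimes> Y is moved to entry j*m+i.)\<close>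
definition swap_mat :: "nat \<Rightarrow> nat \<Rightarrow> real mat" where
  "swap_mat m n = mat (m*n) (m*n) (\<lambda>(r,c). if r = (c mod n) * m + c div n then 1 else 0)"

definition kron_vec :: "real vec \<Rightarrow> real vec \<Rightarrow> real vec" where
  "kron_vec u v = vec (dim_vec u * dim_vec v) (\<lambda>i. u $ (i div dim_vec v) * v $ (i mod dim_vec v))"

definition kron_list :: "real vec list \<Rightarrow> real vec" where
  "kron_list xs = foldr kron_vec xs (vec 1 (\<lambda>_. 1))"

definition delta :: "nat \<Rightarrow> nat \<Rightarrow> real vec" where
  "delta \<kappa> j = unit_vec \<kappa> (j - 1)"

text \<open>Strictly increasing (n-1)-tuples with entries in {1..kappa}, in lexicographic order
  (z^1,...,z^l correspond to list positions 0,...,l-1).\<close>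
definition inc_tuples :: "nat \<Rightarrow> nat \<Rightarrow> nat list list" where
  "inc_tuples n \<kappa> = sorted_list_of_set
     {zs. length zs = n - 1 \<and> sorted_wrt (<) zs \<and> set zs \<subseteq> {1..\<kappa>}}"

text \<open>(eta^i_j)^T = delta^j \<otimes> sum_{sigma in S_{n-1}} sgn(sigma) delta^{z_{sigma(1)}} \<otimes> ... \<otimes> delta^{z_{sigma(n-1)}},
  where z is the given tuple (1-based entries z_1..z_{n-1} stored at list positions 0..n-2).\<close>
definition eta :: "nat \<Rightarrow> nat \<Rightarrow> nat list \<Rightarrow> nat \<Rightarrow> real vec" where
  "eta n \<kappa> z j = kron_vec (delta \<kappa> j)
     (vec (\<kappa> ^ (n - 1)) (\<lambda>k. \<Sum>\<sigma> \<in> {\<sigma>. \<sigma> permutes {1..n-1}}.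
        of_int (sign \<sigma>) * kron_list (map (\<lambda>t. delta \<kappa> (z ! (\<sigma> t - 1))) [1..<n]) $ k))"

text \<open>B has rows eta^1_1,...,eta^1_kappa,...,eta^l_1,...,eta^l_kappa (0-based row r = i*kappa + j).\<close>
definition B_mat :: "nat \<Rightarrow> nat \<Rightarrow> real mat" where
  "B_mat n \<kappa> = mat (\<kappa> * length (inc_tuples n \<kappa>)) (\<kappa> ^ n)
     (\<lambda>(r,c). eta n \<kappa> (inc_tuples n \<kappa> ! (r div \<kappa>)) (r mod \<kappa> + 1) $ c)"

definition D_block :: "nat \<Rightarrow> nat \<Rightarrow> nat \<Rightarrow> real mat" where
  "D_block n \<kappa> k = (if k = 0 then B_mat n \<kappa>
     else stp (stp (- B_mat n \<kappa>) (swap_mat (\<kappa> ^ (k - 1)) \<kappa>)) (swap_mat \<kappa> (\<kappa> ^ k)))"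

text \<open>D = [block 0, block 1, ..., block (n-1)] (horizontal concatenation, each block has kappa^n columns).\<close>
definition D_mat :: "nat \<Rightarrow> nat \<Rightarrow> real mat" where
  "D_mat n \<kappa> = mat (dim_row (B_mat n \<kappa>)) (n * \<kappa> ^ n)
     (\<lambda>(r,c). D_block n \<kappa> (c div \<kappa> ^ n) $$ (r, c mod \<kappa> ^ n))"

text \<open>Payoff of player i (1-based) at profile x (x t in {1..kappa} is the strategy of player t),
  for the game with structure vector v = [V_1,...,V_n]: c_i(x) = V_i (x_1 \<otimes> ... \<otimes> x_n).\<close>
definition payoff :: "nat \<Rightarrow> nat \<Rightarrow> real vec \<Rightarrow> nat \<Rightarrow> (nat \<Rightarrow> nat) \<Rightarrow> real" where
  "payoff n \<kappa> v i x = (\<Sum>col < \<kappa> ^ n. v $ ((i - 1) * \<kappa> ^ n + col) *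
      kron_list (map (\<lambda>t. delta \<kappa> (x t)) [1..<n+1]) $ col)"

definition profile :: "nat \<Rightarrow> nat \<Rightarrow> (nat \<Rightarrow> nat) \<Rightarrow> bool" where
  "profile n \<kappa> x \<longleftrightarrow> (\<forall>t \<in> {1..n}. x t \<in> {1..\<kappa>})"

definition skew_symmetric_game :: "nat \<Rightarrow> nat \<Rightarrow> real vec \<Rightarrow> bool" where
  "skew_symmetric_game n \<kappa> v \<longleftrightarrow>
     (\<forall>\<sigma>. \<sigma> permutes {1..n} \<longrightarrow> (\<forall>i \<in> {1..n}. \<forall>x. profile n \<kappa> x \<longrightarrow>
        payoff n \<kappa> v i x = of_int (sign \<sigma>) * payoff n \<kappa> v (\<sigma> i) (\<lambda>t. x (Hilbert_Choice.inv \<sigma> t))))"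

definition skew_space :: "nat \<Rightarrow> nat \<Rightarrow> real vec set" where
  "skew_space n \<kappa> = {v. dim_vec v = n * \<kappa> ^ n \<and> skew_symmetric_game n \<kappa> v}"

definition lincomb_rows :: "real mat \<Rightarrow> (nat \<Rightarrow> real) \<Rightarrow> real vec" where
  "lincomb_rows M c = vec (dim_col M) (\<lambda>k. \<Sum>r < dim_row M. c r * M $$ (r, k))"

definition rows_form_basis :: "real mat \<Rightarrow> real vec set \<Rightarrow> bool" where
  "rows_form_basis M S \<longleftrightarrow>
     (\<forall>c. lincomb_rows M c = 0\<^sub>v (dim_col M) \<longrightarrow> (\<forall>r < dim_row M. c r = 0)) \<and>
     S = {lincomb_rows M c | c. True}"

end

theory Submission
  imports Defs
begin

definition encr :: "nat \<Rightarrow> (nat \<Rightarrow> nat) \<Rightarrow> nat \<Rightarrow> nat \<Rightarrow> nat" where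
  "encr k x a b = (\<Sum>t\<in>{a..<b}. (x t - 1) * k^(b-1-t))"

lemma encr_empty[simp]: "b \<le> a \<Longrightarrow> encr k x a b = 0"
  by (simp add: encr_def)

lemma encr_split:
  assumes "a \<le> b" "b \<le> c"
  shows "encr k x a c = encr k x a b * k^(c-b) + encr k x b c"
proof -
  have "encr k x a c = (\<Sum>t\<in>{a..<b}. (x t - 1) * k^(c-1-t)) + (\<Sum>t\<in>{b..<c}. (x t - 1) * k^(c-1-t))"
    unfolding encr_def using assms by (simp add: sum.atLeastLessThan_concat)
  also have "(\<Sum>t\<in>{a..<b}. (x t - 1) * k^(c-1-t)) = (\<Sum>t\<in>{a..<b}. (x t - 1) * k^(b-1-t)) * k^(c-b)"
    unfolding sum_distrib_right
  proof (rule sum.cong)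
    fix t assume "t \<in> {a..<b}"
    then have "c-1-t = (b-1-t) + (c-b)" using assms by auto
    then show "(x t - 1) * k^(c-1-t) = (x t - 1) * k^(b-1-t) * k^(c-b)"
      by (simp add: power_add)
  qed simp
  finally show ?thesis by (simp add: encr_def)
qed

lemma encr_one[simp]: "encr k x b (Suc b) = x b - 1"
  by (simp add: encr_def)

lemma encr_Suc:
  assumes "a \<le> b"
  shows "encr k x a (Suc b) = encr k x a b * k + (x b - 1)"
  using encr_split[OF assms, of "Suc b" k x] by simp

lemma encr_cong:
  assumes "\<And>t. t \<in> {a..<b} \<Longrightarrow> x t = y t"
  shows "encr k x a b = encr k y a b"
  unfolding encr_def using assms by (intro sum.cong) auto

lemma encr_lt:
  assumes "\<And>t. t \<in> {a..<b} \<Longrightarrow> 1 \<le> x t \<and> x t \<le> k"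
  shows "encr k x a b < k^(b-a)"
  using assms
proof (induction b)
  case 0
  then show ?case by simp
next
  case (Suc b)
  show ?case
  proof (cases "a \<le> b")
    case False
    then have "Suc b \<le> a" by simp
    then show ?thesis by simp
  next
    case True
    have ih: "encr k x a b < k^(b-a)" using Suc by auto
    have xb: "1 \<le> x b \<and> x b \<le> k" using Suc.prems True by auto
    have "encr k x a (Suc b) = encr k x a b * k + (x b - 1)" using encr_Suc[OF True] .
    also have "\<dots> < encr k x a b * k + k" using xb by linarith
    also have "\<dots> = (encr k x a b + 1) * k" by simp
    also have "\<dots> \<le> k^(b-a) * k" using ih by (intro mult_right_mono) auto
    also have "\<dots> = k^(Suc b - a)" using True by (simp add: Suc_diff_le)
    finally show ?thesis .
  qed
qed

lemma divmod_aux: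
  fixes e r k :: nat
  assumes "r < k"
  shows "(e*k + r) mod k = r" "(e*k + r) div k = e"
  using assms by auto

lemma encr_inj:
  assumes "\<And>t. t \<in> {a..<b} \<Longrightarrow> 1 \<le> x t \<and> x t \<le> k"
      and "\<And>t. t \<in> {a..<b} \<Longrightarrow> 1 \<le> y t \<and> y t \<le> k"
      and "encr k x a b = encr k y a b"
  shows "\<forall>t\<in>{a..<b}. x t = y t"
  using assms
proof (induction b)
  case 0
  then show ?case by simp
next
  case (Suc b)
  show ?case
  proof (cases "a \<le> b")
    case False
    then show ?thesis by auto
  next
    case True
    have xb: "1 \<le> x b \<and> x b \<le> k" "1 \<le> y b \<and> y b \<le> k" using Suc.prems True by auto
    have eq: "encr k x a b * k + (x b - 1) = encr k y a b * k + (y b - 1)"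
      using Suc.prems(3) encr_Suc[OF True] by metis
    have lx: "x b - 1 < k" "y b - 1 < k" using xb by auto
    have "(encr k x a b * k + (x b - 1)) mod k = x b - 1" using divmod_aux(1)[OF lx(1)] .
    moreover have "(encr k y a b * k + (y b - 1)) mod k = y b - 1" using divmod_aux(1)[OF lx(2)] .
    ultimately have "x b - 1 = y b - 1" using eq by metis
    then have e1: "x b = y b" using xb by linarith
    have "(encr k x a b * k + (x b - 1)) div k = encr k x a b" using divmod_aux(2)[OF lx(1)] .
    moreover have "(encr k y a b * k + (y b - 1)) div k = encr k y a b" using divmod_aux(2)[OF lx(2)] .
    ultimately have "encr k x a b = encr k y a b" using eq by metis
    then have "\<forall>t\<in>{a..<b}. x t = y t" using Suc by auto
    then show ?thesis using e1 by (auto simp: less_Suc_eq)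
  qed
qed

lemma encr_surj:
  assumes "1 \<le> k" "a \<le> b" "c < k^(b-a)"
  shows "\<exists>x. (\<forall>t. 1 \<le> x t \<and> x t \<le> k) \<and> encr k x a b = c"
  using assms(2,3)
proof (induction b arbitrary: c)
  case 0
  then show ?case using assms(1) by (intro exI[of _ "\<lambda>_. 1"]) auto
next
  case (Suc b)
  show ?case
  proof (cases "a = Suc b")
    case True
    then show ?thesis using Suc.prems assms(1) by (intro exI[of _ "\<lambda>_. 1"]) auto
  next
    case False
    then have ab: "a \<le> b" using Suc.prems by simp
    have "c div k < k^(b-a)"
      using Suc.prems ab by (simp add: Suc_diff_le less_mult_imp_div_less mult.commute)
    then obtain x where x: "\<forall>t. 1 \<le> x t \<and> x t \<le> k" "encr k x a b = c div k"
      using Suc.IH ab by blast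
    define x' where "x' = x(b := c mod k + 1)"
    have "\<forall>t. 1 \<le> x' t \<and> x' t \<le> k" using x assms(1) by (auto simp: x'_def Suc_le_eq)
    moreover have "encr k x' a (Suc b) = c"
    proof -
      have "encr k x' a b = encr k x a b" by (rule encr_cong) (auto simp: x'_def)
      then show ?thesis using x encr_Suc[OF ab, of k x'] by (simp add: x'_def)
    qed
    ultimately show ?thesis by blast
  qed
qed

lemma kron_vec_unit:
  assumes "i < k" "j < M"
  shows "kron_vec (unit_vec k i) (unit_vec M j) = unit_vec (k*M) (i*M+j)"
proof (rule eq_vecI)
  show "dim_vec (kron_vec (unit_vec k i) (unit_vec M j)) = dim_vec (unit_vec (k*M) (i*M+j))"
    by (simp add: kron_vec_def)
  fix q assume "q < dim_vec (unit_vec (k*M) (i*M+j))"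
  then have q: "q < k*M" by simp
  then have "q div M < k" "q mod M < M" using assms
    by (auto simp: less_mult_imp_div_less mult.commute)
  moreover have "(q div M = i \<and> q mod M = j) \<longleftrightarrow> q = i*M+j"
    using assms by (auto simp: div_mult_mod_eq[symmetric])
  ultimately show "kron_vec (unit_vec k i) (unit_vec M j) $ q = unit_vec (k*M) (i*M+j) $ q"
    using q by (auto simp: kron_vec_def unit_vec_def)
qed

lemma kron_list_Cons: "kron_list (y # ys) = kron_vec y (kron_list ys)"
  by (simp add: kron_list_def)

lemma kron_list_deltas:
  assumes "\<And>t. t \<in> {a..<b} \<Longrightarrow> 1 \<le> x t \<and> x t \<le> k"
  shows "kron_list (map (\<lambda>t. delta k (x t)) [a..<b]) = unit_vec (k^(b-a)) (encr k x a b)"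
  using assms
proof (induction "b - a" arbitrary: a)
  case 0
  then have "[a..<b] = []" by simp
  moreover have "vec 1 (\<lambda>_. 1) = (unit_vec 1 0 :: real vec)"
    by (auto simp: unit_vec_def)
  ultimately show ?case using 0 by (simp add: kron_list_def)
next
  case (Suc d)
  then have ab: "a < b" by simp
  have ih: "kron_list (map (\<lambda>t. delta k (x t)) [Suc a..<b]) = unit_vec (k^(b - Suc a)) (encr k x (Suc a) b)"
    using Suc by auto
  have xa: "1 \<le> x a \<and> x a \<le> k" using Suc.prems ab by auto
  have lt: "encr k x (Suc a) b < k^(b - Suc a)" using Suc.prems by (intro encr_lt) auto
  have "kron_list (map (\<lambda>t. delta k (x t)) [a..<b]) =
        kron_vec (unit_vec k (x a - 1)) (unit_vec (k^(b - Suc a)) (encr k x (Suc a) b))"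
    using ab ih by (simp add: upt_conv_Cons kron_list_Cons delta_def)
  also have "\<dots> = unit_vec (k * k^(b - Suc a)) ((x a - 1) * k^(b - Suc a) + encr k x (Suc a) b)"
    using xa lt by (intro kron_vec_unit) auto
  also have "k * k^(b - Suc a) = k^(b-a)" using ab
    by (metis Suc_diff_Suc power_Suc)
  also have "(x a - 1) * k^(b - Suc a) + encr k x (Suc a) b = encr k x a b"
    using encr_split[of a "Suc a" b k x] ab by simp
  finally show ?case .
qed

lemma encr_shift: "encr k x (Suc a) (Suc b) = encr k (\<lambda>t. x (Suc t)) a b"
proof -
  have "encr k x (a+1) (b+1) = (\<Sum>t\<in>{a..<b}. (x (t+1) - 1) * k^(b+1-1-(t+1)))"
    unfolding encr_def by (rule sum.shift_bounds_nat_ivl)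
  then show ?thesis by (simp add: encr_def)
qed

lemma dim_kron_mat[simp]:
  "dim_row (kron_mat A B) = dim_row A * dim_row B"
  "dim_col (kron_mat A B) = dim_col A * dim_col B"
  by (simp_all add: kron_mat_def)

lemma kron_mat_one1: "kron_mat A (1\<^sub>m 1) = A"
  by (rule eq_matI) (auto simp: kron_mat_def)

definition swp :: "nat \<Rightarrow> nat \<Rightarrow> nat \<Rightarrow> nat \<Rightarrow> nat" where
  "swp m nn q j = ((j div q) mod nn * m + (j div q) div nn) * q + j mod q"

lemma divmod_iff:
  fixes i P q s :: nat
  assumes "s < q"
  shows "(i div q = P \<and> i mod q = s) \<longleftrightarrow> i = P*q + s"
  using assms by (metis add.commute div_mult_mod_eq divmod_aux mult.commute)

lemma swp_lt:
  assumes "j < m*nn*q"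
  shows "swp m nn q j < m*nn*q"
proof -
  define jd where "jd = j div q"
  have q: "0 < q" using assms by (cases q) auto
  have jd: "jd < m*nn" using assms by (simp add: jd_def less_mult_imp_div_less)
  then have nn: "0 < nn" by (cases nn) auto
  have "jd div nn < m" using jd by (simp add: less_mult_imp_div_less)
  then have "jd mod nn * m + jd div nn < (jd mod nn + 1) * m" by simp
  also have "\<dots> \<le> nn * m" using nn by (intro mult_right_mono) (auto simp: Suc_le_eq)
  finally have P: "jd mod nn * m + jd div nn < m*nn" by (simp add: mult.commute)
  have "swp m nn q j < (jd mod nn * m + jd div nn) * q + q"
    using q by (simp add: swp_def jd_def)
  also have "\<dots> = (jd mod nn * m + jd div nn + 1) * q" by simp
  also have "\<dots> \<le> m*nn*q" using P by (intro mult_right_mono) auto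
  finally show ?thesis .
qed

lemma swapI_entry:
  assumes "i < m*nn*q" "j < m*nn*q"
  shows "kron_mat (swap_mat m nn) (1\<^sub>m q) $$ (i,j) = (if i = swp m nn q j then 1 else 0)"
proof -
  have q: "0 < q" using assms by (cases q) auto
  have d: "i div q < m*nn" "j div q < m*nn" using assms by (auto simp: less_mult_imp_div_less)
  have e: "kron_mat (swap_mat m nn) (1\<^sub>m q) $$ (i,j) =
    swap_mat m nn $$ (i div q, j div q) * 1\<^sub>m q $$ (i mod q, j mod q)"
    using assms by (simp add: kron_mat_def swap_mat_def)
  also have "\<dots> = (if i div q = (j div q) mod nn * m + (j div q) div nn \<and> i mod q = j mod q then 1 else 0)"
    using d q by (simp add: swap_mat_def)
  also have "\<dots> = (if i = swp m nn q j then 1 else 0)"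
    using divmod_iff[of "j mod q" q i] q by (simp add: swp_def)
  finally show ?thesis .
qed

lemma mult_perm:
  fixes A M :: "real mat"
  assumes A: "A \<in> carrier_mat R N" and M: "M \<in> carrier_mat N N"
    and Me: "\<And>i j. i < N \<Longrightarrow> j < N \<Longrightarrow> M $$ (i,j) = (if i = p j then 1 else 0)"
    and c: "c < N" and pc: "p c < N" and r: "r < R"
  shows "(A * M) $$ (r,c) = A $$ (r, p c)"
proof -
  have "(A * M) $$ (r,c) = (\<Sum>i\<in>{0..<N}. A $$ (r,i) * M $$ (i,c))"
    using A M c r by (simp add: scalar_prod_def)
  also have "\<dots> = (\<Sum>i\<in>{0..<N}. if i = p c then A $$ (r,i) else 0)"
    using Me c by (intro sum.cong) auto
  also have "\<dots> = A $$ (r, p c)" using pc by simp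
  finally show ?thesis .
qed

lemma stp_dvd:
  assumes "dim_col A = N" "dim_row W = P" "0 < N" "P dvd N"
  shows "stp A W = A * kron_mat W (1\<^sub>m (N div P))"
proof -
  have "lcm N P = N" using assms by (simp add: lcm_proj1_if_dvd)
  then show ?thesis using assms kron_mat_one1[of A] by (simp add: stp_def Let_def)
qed

lemma B_carrier: "B_mat n \<kappa> \<in> carrier_mat (\<kappa> * length (inc_tuples n \<kappa>)) (\<kappa>^n)"
  unfolding B_mat_def by (rule mat_carrier)

lemma D_block_entry:
  assumes k: "1 \<le> \<kappa>" and b: "1 \<le> b" "b < n" and r: "r < dim_row (B_mat n \<kappa>)" and c: "c < \<kappa>^n"
  shows "D_block n \<kappa> b $$ (r,c) =
     - B_mat n \<kappa> $$ (r, swp (\<kappa>^(b-1)) \<kappa> (\<kappa>^(n-b)) (swp \<kappa> (\<kappa>^b) (\<kappa>^(n-b-1)) c))"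
proof -
  define B where "B = B_mat n \<kappa>"
  define R where "R = dim_row B"
  define N where "N = \<kappa>^n"
  have BC: "B \<in> carrier_mat R N" using B_carrier[of n \<kappa>] unfolding B_def R_def N_def carrier_mat_def by blast
  have N0: "0 < N" using k by (simp add: N_def)
  have e1: "\<kappa>^(b-1)*\<kappa>*\<kappa>^(n-b) = N"
  proof -
    have "\<kappa>^(b-1)*\<kappa>*\<kappa>^(n-b) = \<kappa>^((b-1)+1+(n-b))" by (simp add: power_add)
    also have "(b-1)+1+(n-b) = n" using b by simp
    finally show ?thesis by (simp add: N_def)
  qed
  have e2: "\<kappa>*\<kappa>^b*\<kappa>^(n-b-1) = N"
  proof -
    have "\<kappa>*\<kappa>^b*\<kappa>^(n-b-1) = \<kappa>^(1+b+(n-b-1))" by (simp add: power_add)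
    also have "1+b+(n-b-1) = n" using b by simp
    finally show ?thesis by (simp add: N_def)
  qed
  have pos1: "\<kappa>^(b-1)*\<kappa> \<noteq> 0" using k by simp
  have pos2: "\<kappa>*\<kappa>^b \<noteq> 0" using k by simp
  have q1: "N div (\<kappa>^(b-1)*\<kappa>) = \<kappa>^(n-b)"
    unfolding e1[symmetric] using pos1 by (rule nonzero_mult_div_cancel_left)
  have q2: "N div (\<kappa>*\<kappa>^b) = \<kappa>^(n-b-1)"
    unfolding e2[symmetric] using pos2 by (rule nonzero_mult_div_cancel_left)
  have dv1: "\<kappa>^(b-1)*\<kappa> dvd N" using e1 by (metis dvd_triv_left)
  have dv2: "\<kappa>*\<kappa>^b dvd N" using e2 by (metis dvd_triv_left)
  define M1 where "M1 = kron_mat (swap_mat (\<kappa>^(b-1)) \<kappa>) (1\<^sub>m (\<kappa>^(n-b)))"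
  define M2 where "M2 = kron_mat (swap_mat \<kappa> (\<kappa>^b)) (1\<^sub>m (\<kappa>^(n-b-1)))"
  define p1 where "p1 = swp (\<kappa>^(b-1)) \<kappa> (\<kappa>^(n-b))"
  define p2 where "p2 = swp \<kappa> (\<kappa>^b) (\<kappa>^(n-b-1))"
  have M1C: "M1 \<in> carrier_mat N N" unfolding carrier_mat_def M1_def dim_kron_mat
    by (simp only: swap_mat_def dim_row_mat dim_col_mat index_one_mat) (use e1 in simp)
  have M2C: "M2 \<in> carrier_mat N N" unfolding carrier_mat_def M2_def dim_kron_mat
    by (simp only: swap_mat_def dim_row_mat dim_col_mat index_one_mat) (use e2 in simp)
  have M1e: "M1 $$ (i,j) = (if i = p1 j then 1 else 0)" if "i < N" "j < N" for i j
    unfolding M1_def p1_def using that by (intro swapI_entry) (simp_all only: e1)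
  have M2e: "M2 $$ (i,j) = (if i = p2 j then 1 else 0)" if "i < N" "j < N" for i j
    unfolding M2_def p2_def using that by (intro swapI_entry) (simp_all only: e2)
  have p1lt: "p1 j < N" if "j < N" for j
    unfolding p1_def using swp_lt[of j "\<kappa>^(b-1)" \<kappa> "\<kappa>^(n-b)"] that unfolding e1 by blast
  have p2lt: "p2 j < N" if "j < N" for j
    unfolding p2_def using swp_lt[of j \<kappa> "\<kappa>^b" "\<kappa>^(n-b-1)"] that unfolding e2 by blast
  have s1: "stp (- B) (swap_mat (\<kappa>^(b-1)) \<kappa>) = - B * M1"
    unfolding M1_def using BC N0 dv1 q1 by (subst stp_dvd[where N=N]) (auto simp: swap_mat_def)
  have XC: "- B * M1 \<in> carrier_mat R N" using BC M1C by auto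
  have s2: "stp (- B * M1) (swap_mat \<kappa> (\<kappa>^b)) = - B * M1 * M2"
    unfolding M2_def using XC N0 dv2 q2 by (subst stp_dvd[where N=N]) (auto simp: swap_mat_def)
  have rR: "r < R" using r by (simp add: R_def B_def)
  have cN: "c < N" using c by (simp add: N_def)
  have "D_block n \<kappa> b $$ (r,c) = (- B * M1 * M2) $$ (r,c)"
    using b s1 s2 by (simp add: D_block_def B_def)
  also have "\<dots> = (- B * M1) $$ (r, p2 c)"
    using XC M2C M2e cN p2lt rR by (intro mult_perm) auto
  also have "\<dots> = (- B) $$ (r, p1 (p2 c))"
    using BC M1C M1e cN p1lt p2lt rR by (intro mult_perm) auto
  also have "\<dots> = - B $$ (r, p1 (p2 c))"
    using BC rR p1lt p2lt cN by simp
  finally show ?thesis by (simp add: B_def p1_def p2_def)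
qed


lemma split_divmod:
  assumes "a \<le> b" "b \<le> c" "\<And>t. t \<in> {b..<c} \<Longrightarrow> 1 \<le> x t \<and> x t \<le> k"
  shows "encr k x a c div k^(c-b) = encr k x a b" "encr k x a c mod k^(c-b) = encr k x b c"
proof -
  have lt: "encr k x b c < k^(c-b)" using assms(3) by (rule encr_lt)
  have e: "encr k x a c = encr k x a b * k^(c-b) + encr k x b c" using assms(1,2) by (rule encr_split)
  show "encr k x a c div k^(c-b) = encr k x a b" unfolding e using divmod_aux(2)[OF lt] .
  show "encr k x a c mod k^(c-b) = encr k x b c" unfolding e using divmod_aux(1)[OF lt] .
qed

lemma swp_step2:
  assumes b: "1 \<le> b" "b < n" and x: "\<And>t. t \<in> {1..n} \<Longrightarrow> 1 \<le> x t \<and> x t \<le> k"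
  shows "swp k (k^b) (k^(n-b-1)) (encr k x 1 (n+1)) =
     encr k (\<lambda>t. if t \<le> b then x (t+1) else if t = b+1 then x 1 else x t) 1 (n+1)"
    (is "_ = encr k ?y 1 (n+1)")
proof -
  define c0 where "c0 = encr k x 1 (n+1)"
  have xb: "\<And>t. t \<in> {1..<n+1} \<Longrightarrow> 1 \<le> x t \<and> x t \<le> k" using x by auto
  have ex: "n+1-(b+2) = n-b-1" using b by simp
  have d1: "c0 div k^(n-b-1) = encr k x 1 (b+2)" "c0 mod k^(n-b-1) = encr k x (b+2) (n+1)"
    using split_divmod[of 1 "b+2" "n+1" x k] b xb unfolding c0_def ex by auto
  have d2: "encr k x 1 (b+2) div k^b = x 1 - 1" "encr k x 1 (b+2) mod k^b = encr k x 2 (b+2)"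
    using split_divmod[of 1 2 "b+2" x k] b xb by (auto simp: numeral_2_eq_2)
  have lhs: "swp k (k^b) (k^(n-b-1)) c0 = (encr k x 2 (b+2) * k + (x 1 - 1)) * k^(n-b-1) + encr k x (b+2) (n+1)"
    unfolding swp_def d1 d2 ..
  have "encr k ?y 1 (n+1) = encr k ?y 1 (b+2) * k^(n+1-(b+2)) + encr k ?y (b+2) (n+1)"
    using b by (intro encr_split) auto
  also have "encr k ?y 1 (b+2) = encr k ?y 1 (b+1) * k + (?y (b+1) - 1)"
    using encr_Suc[of 1 "b+1" k ?y] b by simp
  also have "encr k ?y 1 (b+1) = encr k (\<lambda>t. x (Suc t)) 1 (b+1)"
    by (rule encr_cong) auto
  also have "\<dots> = encr k x 2 (b+2)"
    using encr_shift[of k x 1 "b+1"] by (simp add: numeral_2_eq_2)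
  also have "encr k ?y (b+2) (n+1) = encr k x (b+2) (n+1)"
    by (rule encr_cong) auto
  finally show ?thesis unfolding ex lhs[unfolded c0_def] by simp
qed

lemma swp_step1:
  assumes b: "1 \<le> b" "b < n" and y: "\<And>t. t \<in> {1..n} \<Longrightarrow> 1 \<le> y t \<and> y t \<le> k"
  shows "swp (k^(b-1)) k (k^(n-b)) (encr k y 1 (n+1)) =
     encr k (\<lambda>t. if t = 1 then y b else if t \<le> b then y (t-1) else y t) 1 (n+1)"
    (is "_ = encr k ?y 1 (n+1)")
proof -
  define c0 where "c0 = encr k y 1 (n+1)"
  have yb: "\<And>t. t \<in> {1..<n+1} \<Longrightarrow> 1 \<le> y t \<and> y t \<le> k" using y by auto
  have ex: "n+1-(b+1) = n-b" using b by simp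
  have d1: "c0 div k^(n-b) = encr k y 1 (b+1)" "c0 mod k^(n-b) = encr k y (b+1) (n+1)"
    using split_divmod[of 1 "b+1" "n+1" y k] b yb unfolding c0_def ex by auto
  have d2: "encr k y 1 (b+1) div k = encr k y 1 b" "encr k y 1 (b+1) mod k = y b - 1"
    using split_divmod[of 1 b "b+1" y k] b yb by auto
  have lhs: "swp (k^(b-1)) k (k^(n-b)) c0 = ((y b - 1) * k^(b-1) + encr k y 1 b) * k^(n-b) + encr k y (b+1) (n+1)"
    unfolding swp_def d1 d2 ..
  have "encr k ?y 1 (n+1) = encr k ?y 1 (b+1) * k^(n+1-(b+1)) + encr k ?y (b+1) (n+1)"
    using b by (intro encr_split) auto
  also have "encr k ?y 1 (b+1) = encr k ?y 1 2 * k^(b+1-2) + encr k ?y 2 (b+1)"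
    using b by (intro encr_split) auto
  also have "encr k ?y 1 2 = y b - 1" by (simp add: numeral_2_eq_2)
  also have "encr k ?y 2 (b+1) = encr k (\<lambda>t. ?y (Suc t)) 1 b"
    using encr_shift[of k ?y 1 b] by (simp add: numeral_2_eq_2)
  also have "\<dots> = encr k y 1 b"
    by (rule encr_cong) auto
  also have "encr k ?y (b+1) (n+1) = encr k y (b+1) (n+1)"
    using b by (intro encr_cong) auto
  also have "b+1-2 = b-1" by simp
  finally show ?thesis unfolding ex lhs[unfolded c0_def] by simp
qed


lemma D_block_profile:
  assumes k: "1 \<le> \<kappa>" and b: "1 \<le> b" "b < n" and r: "r < dim_row (B_mat n \<kappa>)"
    and x: "\<And>t. t \<in> {1..n} \<Longrightarrow> 1 \<le> x t \<and> x t \<le> \<kappa>"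
  shows "D_block n \<kappa> b $$ (r, encr \<kappa> x 1 (n+1)) =
     - B_mat n \<kappa> $$ (r, encr \<kappa> (x \<circ> Transposition.transpose 1 (b+1)) 1 (n+1))"
proof -
  define y where "y = (\<lambda>t. if t \<le> b then x (t+1) else if t = b+1 then x 1 else x t)"
  have c: "encr \<kappa> x 1 (n+1) < \<kappa>^n"
    using encr_lt[of 1 "n+1" x \<kappa>] x by auto
  have yb: "\<And>t. t \<in> {1..n} \<Longrightarrow> 1 \<le> y t \<and> y t \<le> \<kappa>"
    using x b unfolding y_def by auto
  have "D_block n \<kappa> b $$ (r, encr \<kappa> x 1 (n+1)) =
     - B_mat n \<kappa> $$ (r, swp (\<kappa>^(b-1)) \<kappa> (\<kappa>^(n-b)) (swp \<kappa> (\<kappa>^b) (\<kappa>^(n-b-1)) (encr \<kappa> x 1 (n+1))))"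
    using D_block_entry[OF k b r c] .
  also have "swp \<kappa> (\<kappa>^b) (\<kappa>^(n-b-1)) (encr \<kappa> x 1 (n+1)) = encr \<kappa> y 1 (n+1)"
    unfolding y_def using swp_step2[OF b, of x \<kappa>] x by blast
  also have "swp (\<kappa>^(b-1)) \<kappa> (\<kappa>^(n-b)) (encr \<kappa> y 1 (n+1)) =
     encr \<kappa> (\<lambda>t. if t = 1 then y b else if t \<le> b then y (t-1) else y t) 1 (n+1)"
    using swp_step1[OF b, of y \<kappa>] yb by blast
  also have "\<dots> = encr \<kappa> (x \<circ> Transposition.transpose 1 (b+1)) 1 (n+1)"
    using b by (intro encr_cong) (auto simp: y_def Transposition.transpose_def)
  finally show ?thesis .
qed

lemma unit_vec_index:
  assumes "i < M"
  shows "(unit_vec M j :: real vec) $ i = (if i = j then 1 else 0)"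
  using assms by (auto simp: unit_vec_def)


definition Sset :: "nat \<Rightarrow> nat \<Rightarrow> nat list set" where
  "Sset n \<kappa> = {zs. length zs = n - 1 \<and> sorted_wrt (<) zs \<and> set zs \<subseteq> {1..\<kappa>}}"

lemma Sset_finite: "finite (Sset n \<kappa>)"
proof (rule finite_subset)
  show "Sset n \<kappa> \<subseteq> {xs. set xs \<subseteq> {1..\<kappa>} \<and> length xs = n - 1}" by (auto simp: Sset_def)
  show "finite {xs. set xs \<subseteq> {1..\<kappa>} \<and> length xs = n - 1}" by (rule finite_lists_length_eq) simp
qed

lemma set_T: "set (inc_tuples n \<kappa>) = Sset n \<kappa>"
  unfolding inc_tuples_def Sset_def[symmetric] using Sset_finite by simp

lemma distinct_T: "distinct (inc_tuples n \<kappa>)"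
  unfolding inc_tuples_def by simp

lemma card_Sset: "card (Sset n \<kappa>) = \<kappa> choose (n-1)"
proof -
  have inj: "inj_on set (Sset n \<kappa>)"
    by (auto simp: inj_on_def Sset_def intro: strict_sorted_equal)
  have img: "set ` Sset n \<kappa> = {A. A \<subseteq> {1..\<kappa>} \<and> card A = n - 1}"
  proof
    show "set ` Sset n \<kappa> \<subseteq> {A. A \<subseteq> {1..\<kappa>} \<and> card A = n - 1}"
      by (auto simp: Sset_def strict_sorted_iff distinct_card)
    show "{A. A \<subseteq> {1..\<kappa>} \<and> card A = n - 1} \<subseteq> set ` Sset n \<kappa>"
    proof
      fix A assume A: "A \<in> {A. A \<subseteq> {1..\<kappa>} \<and> card A = n - 1}"
      then have "finite A" by (auto intro: finite_subset)
      then obtain l where l: "sorted_wrt (<) l" "set l = A" "length l = card A"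
        by (rule sorted_list_of_set.finite_set_strict_sorted) auto
      then have "l \<in> Sset n \<kappa>" using A by (auto simp: Sset_def)
      then show "A \<in> set ` Sset n \<kappa>" using l by blast
    qed
  qed
  have "card (Sset n \<kappa>) = card (set ` Sset n \<kappa>)" using inj by (simp add: card_image)
  also have "\<dots> = \<kappa> choose (n-1)" unfolding img using n_subsets[of "{1..\<kappa>}" "n-1"] by simp
  finally show ?thesis .
qed

lemma length_T: "length (inc_tuples n \<kappa>) = \<kappa> choose (n-1)"
proof -
  have "length (inc_tuples n \<kappa>) = card (set (inc_tuples n \<kappa>))"
    using distinct_T by (simp add: distinct_card)
  then show ?thesis by (simp add: set_T card_Sset)
qed


section \<open>Entries of B\<close>

definition tmatch :: "nat list \<Rightarrow> (nat\<Rightarrow>nat) \<Rightarrow> (nat\<Rightarrow>nat) \<Rightarrow> nat \<Rightarrow> bool" where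
  "tmatch z x \<sigma> n \<longleftrightarrow> (\<forall>t\<in>{1..<n}. x (Suc t) = z ! (\<sigma> t - 1))"

definition Bv :: "nat \<Rightarrow> nat list \<Rightarrow> nat \<Rightarrow> (nat\<Rightarrow>nat) \<Rightarrow> real" where
  "Bv n z j x = (if x 1 = j then (\<Sum>\<sigma>\<in>{\<sigma>. \<sigma> permutes {1..n-1}}. of_int (sign \<sigma>) * (if tmatch z x \<sigma> n then 1 else 0)) else 0)"

lemma T_nth:
  assumes "i < length (inc_tuples n \<kappa>)"
  shows "length (inc_tuples n \<kappa> ! i) = n - 1" "sorted_wrt (<) (inc_tuples n \<kappa> ! i)"
    "set (inc_tuples n \<kappa> ! i) \<subseteq> {1..\<kappa>}"
  using nth_mem[OF assms] unfolding set_T by (auto simp: Sset_def)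

lemma B_entry:
  assumes k: "1 \<le> \<kappa>" and n: "1 \<le> n" and r: "r < \<kappa> * length (inc_tuples n \<kappa>)"
    and x: "\<And>t. t \<in> {1..n} \<Longrightarrow> 1 \<le> x t \<and> x t \<le> \<kappa>"
  shows "B_mat n \<kappa> $$ (r, encr \<kappa> x 1 (n+1)) = Bv n (inc_tuples n \<kappa> ! (r div \<kappa>)) (r mod \<kappa> + 1) x"
proof -
  define T where "T = inc_tuples n \<kappa>"
  define z where "z = T ! (r div \<kappa>)"
  define j where "j = r mod \<kappa> + 1"
  define c where "c = encr \<kappa> x 1 (n+1)"
  define M where "M = \<kappa>^(n-1)"
  define g where "g = (\<lambda>k. \<Sum>\<sigma> \<in> {\<sigma>. \<sigma> permutes {1..n-1}}.
        of_int (sign \<sigma>) * kron_list (map (\<lambda>t. delta \<kappa> (z ! (\<sigma> t - 1))) [1..<n]) $ k)"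
  have rT: "r div \<kappa> < length T" using r k unfolding T_def
    by (simp add: less_mult_imp_div_less mult.commute)
  have zl: "length z = n - 1" and zs: "set z \<subseteq> {1..\<kappa>}"
    using T_nth[OF rT[unfolded T_def]] unfolding z_def T_def by auto
  have xb: "\<And>t. t \<in> {1..<n+1} \<Longrightarrow> 1 \<le> x t \<and> x t \<le> \<kappa>" using x by auto
  have kM: "\<kappa> * M = \<kappa>^n" using n unfolding M_def by (metis Suc_diff_le diff_Suc_1 power_Suc)
  have c: "c < \<kappa>^n" using encr_lt[of 1 "n+1" x \<kappa>] xb unfolding c_def by auto
  have ex: "n+1-2 = n-1" by simp
  have d: "c div M = x 1 - 1" "c mod M = encr \<kappa> x 2 (n+1)"
    using split_divmod[of 1 2 "n+1" x \<kappa>] n xb unfolding c_def M_def ex by (auto simp: numeral_2_eq_2)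
  have cm: "c mod M = encr \<kappa> (\<lambda>t. x (Suc t)) 1 n"
    unfolding d using encr_shift[of \<kappa> x 1 n] by (simp add: numeral_2_eq_2)
  have M0: "0 < M" using k by (simp add: M_def)
  have cmM: "c mod M < M" using M0 by simp
  have jk: "j - 1 < \<kappa>" using k by (simp add: j_def)
  have x1: "1 \<le> x 1 \<and> x 1 \<le> \<kappa>" using x n by auto
  have "B_mat n \<kappa> $$ (r, c) = eta n \<kappa> z j $ c"
    using r c unfolding B_mat_def z_def j_def T_def by simp
  also have "\<dots> = delta \<kappa> j $ (c div M) * g (c mod M)"
    using c cmM unfolding eta_def kron_vec_def g_def M_def[symmetric] kM[symmetric]
    by (simp add: delta_def)
  also have "delta \<kappa> j $ (c div M) = (if x 1 = j then 1 else 0)"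
    unfolding d delta_def using x1 jk by (auto simp: unit_vec_def j_def)
  also have "g (c mod M) = (\<Sum>\<sigma>\<in>{\<sigma>. \<sigma> permutes {1..n-1}}. of_int (sign \<sigma>) * (if tmatch z x \<sigma> n then 1 else 0))"
    unfolding g_def
  proof (rule sum.cong[OF refl])
    fix \<sigma> assume "\<sigma> \<in> {\<sigma>. \<sigma> permutes {1..n-1}}"
    then have \<sigma>: "\<sigma> permutes {1..n-1}" by simp
    define y where "y = (\<lambda>t. z ! (\<sigma> t - 1))"
    have yb: "1 \<le> y t \<and> y t \<le> \<kappa>" if "t \<in> {1..<n}" for t
    proof -
      have "t \<in> {1..n-1}" using that by auto
      then have "\<sigma> t \<in> {1..n-1}" using permutes_in_image[OF \<sigma>, of t] by blast
      then have "\<sigma> t - 1 < length z" using zl by auto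
      then have "y t \<in> set z" unfolding y_def by simp
      then show ?thesis using zs by auto
    qed
    have kl: "kron_list (map (\<lambda>t. delta \<kappa> (z ! (\<sigma> t - 1))) [1..<n]) = unit_vec M (encr \<kappa> y 1 n)"
      using kron_list_deltas[of 1 n y \<kappa>] yb unfolding y_def M_def by auto
    have xs: "1 \<le> x (Suc t) \<and> x (Suc t) \<le> \<kappa>" if "t \<in> {1..<n}" for t using x that by auto
    have "(encr \<kappa> (\<lambda>t. x (Suc t)) 1 n = encr \<kappa> y 1 n) \<longleftrightarrow> tmatch z x \<sigma> n"
    proof
      assume "encr \<kappa> (\<lambda>t. x (Suc t)) 1 n = encr \<kappa> y 1 n"
      then have "\<forall>t\<in>{1..<n}. x (Suc t) = y t" using encr_inj[of 1 n "\<lambda>t. x (Suc t)" \<kappa> y] xs yb by blast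
      then show "tmatch z x \<sigma> n" by (simp add: tmatch_def y_def)
    next
      assume "tmatch z x \<sigma> n"
      then show "encr \<kappa> (\<lambda>t. x (Suc t)) 1 n = encr \<kappa> y 1 n"
        by (intro encr_cong) (auto simp: tmatch_def y_def)
    qed
    then show "of_int (sign \<sigma>) * kron_list (map (\<lambda>t. delta \<kappa> (z ! (\<sigma> t - 1))) [1..<n]) $ (c mod M) =
        of_int (sign \<sigma>) * (if tmatch z x \<sigma> n then 1 else 0)"
      unfolding kl using cmM unfolding cm by (simp add: unit_vec_index)
  qed
  finally show ?thesis unfolding Bv_def c_def z_def j_def T_def by simp
qed


lemma permutes_fix1:
  fixes \<pi> :: "nat \<Rightarrow> nat"
  assumes "\<pi> permutes {1..n}" "\<pi> 1 = 1"
  shows "\<pi> permutes {2..n}"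
proof -
  have a: "\<forall>x. x \<notin> {1..n} \<longrightarrow> \<pi> x = x" "\<forall>y. \<exists>!x. \<pi> x = y" using assms(1) unfolding permutes_def by auto
  have "\<pi> x = x" if "x \<notin> {2..n}" for x
  proof (cases "x = 1")
    case True then show ?thesis using assms(2) by simp
  next
    case False then have "x \<notin> {1..n}" using that by auto
    then show ?thesis using a(1) by blast
  qed
  then show ?thesis using a(2) unfolding permutes_def by blast
qed

lemma shift_perm:
  assumes "\<pi> permutes {1..n}" "\<pi> 1 = 1"
  defines "\<pi>' \<equiv> (\<lambda>s. if s \<in> {1..n-1} then \<pi> (Suc s) - 1 else s)"
  shows "\<pi>' permutes {1..n-1}" "sign \<pi>' = sign \<pi>" "\<And>s. s \<in> {1..n-1} \<Longrightarrow> \<pi> (Suc s) = Suc (\<pi>' s)"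
proof -
  have p2: "\<pi> permutes {2..n}" using permutes_fix1[OF assms(1,2)] .
  have bij: "bij_betw (\<lambda>t. t - 1) {2..n} {1..n-1}"
  proof (rule bij_betw_byWitness[where f'=Suc])
  qed auto
  interpret pb: permutes_bij_finite \<pi> "{2..n}" "{1..n-1}" "\<lambda>t. t - 1" Suc \<pi>'
    unfolding \<pi>'_def by unfold_locales (use p2 bij in auto)
  show "\<pi>' permutes {1..n-1}" using pb.permutes_p' .
  show "sign \<pi>' = sign \<pi>" using pb.sign_p' .
  fix s assume s: "s \<in> {1..n-1}"
  then have "Suc s \<in> {2..n}" by auto
  then have "\<pi> (Suc s) \<in> {2..n}" using permutes_in_image[OF p2] by blast
  then show "\<pi> (Suc s) = Suc (\<pi>' s)" using s unfolding \<pi>'_def by auto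
qed

lemma unshift_perm:
  assumes "\<sigma> permutes {1..n-1}"
  defines "\<pi> \<equiv> (\<lambda>t. if t \<in> {2..n} then Suc (\<sigma> (t - 1)) else t)"
  shows "\<pi> permutes {1..n}" "\<pi> 1 = 1" "sign \<pi> = sign \<sigma>"
proof -
  have bij: "bij_betw Suc {1..n-1} {2..n}"
  proof (rule bij_betw_byWitness[where f'="\<lambda>t. t - 1"])
  qed auto
  interpret pb: permutes_bij_finite \<sigma> "{1..n-1}" "{2..n}" Suc "\<lambda>t. t - 1" \<pi>
    unfolding \<pi>_def by unfold_locales (use assms(1) bij in auto)
  have "\<pi> permutes {2..n}" using pb.permutes_p' .
  then show "\<pi> permutes {1..n}" by (rule permutes_subset) auto
  show "\<pi> 1 = 1" unfolding \<pi>_def by simp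
  show "sign \<pi> = sign \<sigma>" using pb.sign_p' .
qed


lemma tmatch_unique:
  assumes z: "distinct z" "length z = n - 1"
    and s1: "\<sigma>1 permutes {1..n-1}" and s2: "\<sigma>2 permutes {1..n-1}"
    and m1: "tmatch z x \<sigma>1 n" and m2: "tmatch z x \<sigma>2 n"
  shows "\<sigma>1 = \<sigma>2"
proof
  fix t
  show "\<sigma>1 t = \<sigma>2 t"
  proof (cases "t \<in> {1..n-1}")
    case True
    then have a: "\<sigma>1 t \<in> {1..n-1}" "\<sigma>2 t \<in> {1..n-1}"
      using permutes_in_image[OF s1] permutes_in_image[OF s2] by auto
    have "z ! (\<sigma>1 t - 1) = z ! (\<sigma>2 t - 1)"
      using m1 m2 True unfolding tmatch_def by auto
    then have "\<sigma>1 t - 1 = \<sigma>2 t - 1" using nth_eq_iff_index_eq[OF z(1)] a z(2) by auto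
    then show ?thesis using a by auto
  next
    case False
    then show ?thesis using permutes_not_in[OF s1] permutes_not_in[OF s2] by simp
  qed
qed

lemma finite_perms: "finite {\<sigma>. \<sigma> permutes {1..(m::nat)}}"
  by (rule finite_permutations) simp

lemma Bv_match:
  assumes z: "distinct z" "length z = n - 1"
    and s: "\<sigma> permutes {1..n-1}" and m: "tmatch z x \<sigma> n"
  shows "Bv n z j x = (if x 1 = j then of_int (sign \<sigma>) else 0)"
proof -
  have "(\<Sum>\<sigma>'\<in>{\<sigma>. \<sigma> permutes {1..n-1}}. of_int (sign \<sigma>') * (if tmatch z x \<sigma>' n then 1 else 0)) =
        (\<Sum>\<sigma>'\<in>{\<sigma>. \<sigma> permutes {1..n-1}}. if \<sigma>' = \<sigma> then of_int (sign \<sigma>) else (0::real))"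
  proof (rule sum.cong[OF refl])
    fix \<sigma>' assume "\<sigma>' \<in> {\<sigma>. \<sigma> permutes {1..n-1}}"
    then have s': "\<sigma>' permutes {1..n-1}" by simp
    show "of_int (sign \<sigma>') * (if tmatch z x \<sigma>' n then 1 else 0) = (if \<sigma>' = \<sigma> then of_int (sign \<sigma>) else (0::real))"
    proof (cases "\<sigma>' = \<sigma>")
      case True
      then show ?thesis using m by simp
    next
      case False
      then have "\<not> tmatch z x \<sigma>' n" using tmatch_unique[OF z s' s _ m] by blast
      then show ?thesis using False by simp
    qed
  qed
  also have "\<dots> = of_int (sign \<sigma>)" using s finite_perms[of "n-1"] by simp
  finally show ?thesis unfolding Bv_def by simp
qed

lemma Bv_nonzero:
  assumes "Bv n z j x \<noteq> 0"
  shows "x 1 = j" "\<exists>\<sigma>. \<sigma> permutes {1..n-1} \<and> tmatch z x \<sigma> n"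
proof -
  show "x 1 = j" using assms unfolding Bv_def by (auto split: if_splits)
  show "\<exists>\<sigma>. \<sigma> permutes {1..n-1} \<and> tmatch z x \<sigma> n"
  proof (rule ccontr)
    assume "\<not> ?thesis"
    then have "\<forall>\<sigma>\<in>{\<sigma>. \<sigma> permutes {1..n-1}}. of_int (sign \<sigma>) * (if tmatch z x \<sigma> n then 1 else 0) = (0::real)"
      by auto
    then have "(\<Sum>\<sigma>\<in>{\<sigma>. \<sigma> permutes {1..n-1}}. of_int (sign \<sigma>) * (if tmatch z x \<sigma> n then 1 else 0)) = (0::real)"
      by (rule sum.neutral)
    then have "Bv n z j x = 0" unfolding Bv_def by simp
    then show False using assms by simp
  qed
qed

lemma tmatch_set:
  assumes z: "length z = n - 1" and s: "\<sigma> permutes {1..n-1}" and m: "tmatch z x \<sigma> n"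
  shows "set z = x ` {2..n}"
proof
  show "set z \<subseteq> x ` {2..n}"
  proof
    fix y assume "y \<in> set z"
    then obtain i where i: "i < n - 1" "z ! i = y" using z by (auto simp: in_set_conv_nth)
    define t where "t = Hilbert_Choice.inv \<sigma> (Suc i)"
    have si: "Suc i \<in> {1..n-1}" using i by auto
    have t: "t \<in> {1..n-1}" using permutes_in_image[OF permutes_inv[OF s]] si unfolding t_def by blast
    have st: "\<sigma> t = Suc i" unfolding t_def using permutes_inverses(1)[OF s] by simp
    have "x (Suc t) = y" using m t st i unfolding tmatch_def by auto
    moreover have "Suc t \<in> {2..n}" using t by auto
    ultimately show "y \<in> x ` {2..n}" by blast
  qed
  show "x ` {2..n} \<subseteq> set z"
  proof
    fix y assume "y \<in> x ` {2..n}"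
    then obtain t' where t': "t' \<in> {2..n}" "y = x t'" by auto
    define t where "t = t' - 1"
    have t: "t \<in> {1..n-1}" "t' = Suc t" using t' unfolding t_def by auto
    have "\<sigma> t \<in> {1..n-1}" using permutes_in_image[OF s] t by blast
    then have "\<sigma> t - 1 < length z" using z by auto
    moreover have "y = z ! (\<sigma> t - 1)" using m t t' unfolding tmatch_def by auto
    ultimately show "y \<in> set z" by simp
  qed
qed

lemma tmatch_inj:
  assumes z: "distinct z" "length z = n - 1" and s: "\<sigma> permutes {1..n-1}" and m: "tmatch z x \<sigma> n"
  shows "inj_on x {2..n}"
proof (rule inj_onI)
  fix a b assume a: "a \<in> {2..n}" and b: "b \<in> {2..n}" and e: "x a = x b"
  have a': "a - 1 \<in> {1..n-1}" "a = Suc (a - 1)" using a by auto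
  have b': "b - 1 \<in> {1..n-1}" "b = Suc (b - 1)" using b by auto
  have sa: "\<sigma> (a-1) \<in> {1..n-1}" "\<sigma> (b-1) \<in> {1..n-1}" using permutes_in_image[OF s] a' b' by auto
  have "a - 1 \<in> {1..<n}" "b - 1 \<in> {1..<n}" using a b by auto
  then have "x (Suc (a-1)) = z ! (\<sigma> (a-1) - 1)" "x (Suc (b-1)) = z ! (\<sigma> (b-1) - 1)"
    using m unfolding tmatch_def by blast+
  then have "z ! (\<sigma> (a-1) - 1) = z ! (\<sigma> (b-1) - 1)" using a' b' e by simp
  moreover have lt: "\<sigma> (a-1) - 1 < length z" "\<sigma> (b-1) - 1 < length z"
  proof -
    have "\<And>p. p \<in> {1..n-1} \<Longrightarrow> p - 1 < length z" using z(2) by auto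
    then show "\<sigma> (a-1) - 1 < length z" "\<sigma> (b-1) - 1 < length z" using sa by blast+
  qed
  ultimately have "\<sigma> (a-1) - 1 = \<sigma> (b-1) - 1" using nth_eq_iff_index_eq[OF z(1) lt] by simp
  moreover have dec: "\<And>p q::nat. 1 \<le> p \<Longrightarrow> 1 \<le> q \<Longrightarrow> p - 1 = q - 1 \<Longrightarrow> p = q" by arith
  moreover have "1 \<le> \<sigma> (a-1)" "1 \<le> \<sigma> (b-1)" using sa by auto
  ultimately have "\<sigma> (a-1) = \<sigma> (b-1)" by blast
  then have "a - 1 = b - 1" using permutes_inj[OF s] by (auto dest: injD)
  then show "a = b" using a' b' by simp
qed

lemma tmatch_exists:
  assumes n: "2 \<le> n" and x: "profile n \<kappa> x" and inj: "inj_on x {2..n}"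
  defines "zs \<equiv> sorted_list_of_set (x ` {2..n})"
  shows "zs \<in> Sset n \<kappa>" "\<exists>\<sigma>. \<sigma> permutes {1..n-1} \<and> tmatch zs x \<sigma> n"
proof -
  have fin: "finite (x ` {2..n})" by simp
  have setzs: "set zs = x ` {2..n}" unfolding zs_def using fin by simp
  have lzs: "length zs = n - 1" unfolding zs_def using card_image[OF inj] by simp
  have dzs: "distinct zs" unfolding zs_def by simp
  have szs: "sorted_wrt (<) zs" unfolding zs_def by simp
  have "set zs \<subseteq> {1..\<kappa>}" using x unfolding setzs profile_def by auto
  then show "zs \<in> Sset n \<kappa>" using lzs szs by (simp add: Sset_def)
  define f where "f = (\<lambda>t. SOME i. i < n - 1 \<and> zs ! i = x (Suc t))"
  have f: "f t < n - 1 \<and> zs ! (f t) = x (Suc t)" if "t \<in> {1..n-1}" for t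
  proof -
    have "x (Suc t) \<in> set zs" using that setzs by auto
    then have "\<exists>i. i < n - 1 \<and> zs ! i = x (Suc t)" using lzs by (auto simp: in_set_conv_nth)
    then show ?thesis unfolding f_def by (rule someI_ex)
  qed
  define \<sigma> where "\<sigma> = (\<lambda>t. if t \<in> {1..n-1} then Suc (f t) else t)"
  have img: "\<sigma> ` {1..n-1} \<subseteq> {1..n-1}" using f unfolding \<sigma>_def by fastforce
  have injs: "inj_on \<sigma> {1..n-1}"
  proof (rule inj_onI)
    fix a b assume a: "a \<in> {1..n-1}" and b: "b \<in> {1..n-1}" and e: "\<sigma> a = \<sigma> b"
    then have "f a = f b" unfolding \<sigma>_def by simp
    then have "x (Suc a) = x (Suc b)" using f a b by metis
    moreover have "Suc a \<in> {2..n}" "Suc b \<in> {2..n}" using a b by auto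
    ultimately have "Suc a = Suc b" using inj by (auto dest: inj_onD)
    then show "a = b" by simp
  qed
  have "\<sigma> ` {1..n-1} = {1..n-1}" using endo_inj_surj[OF _ img injs] by simp
  then have "bij_betw \<sigma> {1..n-1} {1..n-1}" using injs by (simp add: bij_betw_def)
  then have sp: "\<sigma> permutes {1..n-1}" by (rule bij_imp_permutes) (auto simp: \<sigma>_def)
  have "tmatch zs x \<sigma> n" unfolding tmatch_def \<sigma>_def using f by auto
  then show "\<exists>\<sigma>. \<sigma> permutes {1..n-1} \<and> tmatch zs x \<sigma> n" using sp by blast
qed


section \<open>Alternating functions\<close>

definition alt :: "nat \<Rightarrow> nat \<Rightarrow> ((nat\<Rightarrow>nat) \<Rightarrow> real) \<Rightarrow> bool" where
  "alt n \<kappa> G \<longleftrightarrow> (\<forall>\<pi> x. \<pi> permutes {1..n} \<longrightarrow> \<pi> 1 = 1 \<longrightarrow> profile n \<kappa> x \<longrightarrow> G (x \<circ> \<pi>) = of_int (sign \<pi>) * G x)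
     \<and> (\<forall>x y. (\<forall>t\<in>{1..n}. x t = y t) \<longrightarrow> G x = G y)"

lemma profile_comp:
  assumes "profile n \<kappa> x" "\<pi> permutes {1..n}"
  shows "profile n \<kappa> (x \<circ> \<pi>)"
  using assms permutes_in_image[OF assms(2)] unfolding profile_def by auto

lemma tmatch_comp:
  assumes p: "\<pi> permutes {1..n}" "\<pi> 1 = 1" and m: "tmatch z x \<sigma> n"
  shows "tmatch z (x \<circ> \<pi>) (\<sigma> \<circ> (\<lambda>s. if s \<in> {1..n-1} then \<pi> (Suc s) - 1 else s)) n"
  unfolding tmatch_def
proof
  fix t assume t: "t \<in> {1..<n}"
  define \<pi>' where "\<pi>' = (\<lambda>s. if s \<in> {1..n-1} then \<pi> (Suc s) - 1 else s)"
  have t': "t \<in> {1..n-1}" using t by auto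
  have "\<pi>' t \<in> {1..n-1}" using permutes_in_image[OF shift_perm(1)[OF p]] t' unfolding \<pi>'_def by blast
  then have "\<pi>' t \<in> {1..<n}" by auto
  then have "x (Suc (\<pi>' t)) = z ! (\<sigma> (\<pi>' t) - 1)" using m unfolding tmatch_def by blast
  moreover have "\<pi> (Suc t) = Suc (\<pi>' t)" using shift_perm(3)[OF p t'] unfolding \<pi>'_def .
  ultimately show "(x \<circ> \<pi>) (Suc t) = z ! ((\<sigma> \<circ> \<pi>') t - 1)" by simp
qed

lemma Bv_cong:
  assumes "\<forall>t\<in>{1..n}. x t = y t" "1 \<le> n"
  shows "Bv n z j x = Bv n z j y"
proof -
  have "x 1 = y 1" using assms by auto
  moreover have "tmatch z x \<sigma> n = tmatch z y \<sigma> n" for \<sigma>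
    using assms unfolding tmatch_def by auto
  ultimately show ?thesis unfolding Bv_def by simp
qed

lemma Bv_alt:
  assumes z: "distinct z" "length z = n - 1" and n: "2 \<le> n"
  shows "alt n \<kappa> (Bv n z j)"
  unfolding alt_def
proof (intro conjI allI impI)
  fix x y :: "nat \<Rightarrow> nat" assume "\<forall>t\<in>{1..n}. x t = y t"
  then show "Bv n z j x = Bv n z j y" using n by (intro Bv_cong) auto
next
  fix \<pi> x assume p: "\<pi> permutes {1..n}" "\<pi> 1 = 1" and x: "profile n \<kappa> x"
  define \<pi>' where "\<pi>' = (\<lambda>s. if s \<in> {1..n-1} then \<pi> (Suc s) - 1 else s)"
  have p': "\<pi>' permutes {1..n-1}" "sign \<pi>' = sign \<pi>" using shift_perm[OF p] unfolding \<pi>'_def by auto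
  show "Bv n z j (x \<circ> \<pi>) = of_int (sign \<pi>) * Bv n z j x"
  proof (cases "\<exists>\<sigma>. \<sigma> permutes {1..n-1} \<and> tmatch z x \<sigma> n")
    case True
    then obtain \<sigma> where s: "\<sigma> permutes {1..n-1}" "tmatch z x \<sigma> n" by blast
    have m': "tmatch z (x \<circ> \<pi>) (\<sigma> \<circ> \<pi>') n" using tmatch_comp[OF p s(2)] unfolding \<pi>'_def .
    have sp: "\<sigma> \<circ> \<pi>' permutes {1..n-1}" using permutes_compose[OF p'(1) s(1)] .
    have sg: "sign (\<sigma> \<circ> \<pi>') = sign \<sigma> * sign \<pi>'"
      using sign_compose permutes_imp_permutation[OF _ s(1)] permutes_imp_permutation[OF _ p'(1)] by simp
    show ?thesis
      unfolding Bv_match[OF z sp m'] Bv_match[OF z s(1,2)] sg p'(2) using p(2) by simp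
  next
    case False
    then have z1: "Bv n z j x = 0" using Bv_nonzero(2) by blast
    have "Bv n z j (x \<circ> \<pi>) = 0"
    proof (rule ccontr)
      assume "Bv n z j (x \<circ> \<pi>) \<noteq> 0"
      then obtain \<tau> where t: "\<tau> permutes {1..n-1}" "tmatch z (x \<circ> \<pi>) \<tau> n" using Bv_nonzero(2) by blast
      have ip: "Hilbert_Choice.inv \<pi> permutes {1..n}" "Hilbert_Choice.inv \<pi> 1 = 1"
        using permutes_inv[OF p(1)] permutes_inv_eq[OF p(1)] p(2) by auto
      define \<rho> where "\<rho> = (\<lambda>s. if s \<in> {1..n-1} then Hilbert_Choice.inv \<pi> (Suc s) - 1 else s)"
      have "tmatch z (x \<circ> \<pi> \<circ> Hilbert_Choice.inv \<pi>) (\<tau> \<circ> \<rho>) n"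
        using tmatch_comp[OF ip t(2)] unfolding \<rho>_def .
      moreover have "x \<circ> \<pi> \<circ> Hilbert_Choice.inv \<pi> = x"
        using permutes_inv_o(1)[OF p(1)] by (simp add: comp_assoc)
      moreover have "\<tau> \<circ> \<rho> permutes {1..n-1}"
        using permutes_compose[OF shift_perm(1)[OF ip] t(1)] unfolding \<rho>_def .
      ultimately show False using False by auto
    qed
    then show ?thesis using z1 by simp
  qed
qed


section \<open>Expansion\<close>

definition xr :: "nat \<Rightarrow> nat \<Rightarrow> nat \<Rightarrow> nat \<Rightarrow> nat" where
  "xr n \<kappa> r = (\<lambda>t. if t = 1 then r mod \<kappa> + 1 else (inc_tuples n \<kappa> ! (r div \<kappa>)) ! (t - 2))"

definition Bfun :: "nat \<Rightarrow> nat \<Rightarrow> nat \<Rightarrow> (nat \<Rightarrow> nat) \<Rightarrow> real" where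
  "Bfun n \<kappa> r = Bv n (inc_tuples n \<kappa> ! (r div \<kappa>)) (r mod \<kappa> + 1)"

lemma rdiv_lt:
  fixes r \<kappa> L :: nat
  assumes "r < \<kappa> * L"
  shows "r div \<kappa> < L"
  using less_mult_imp_div_less[of r L \<kappa>] assms by (simp add: mult.commute)

lemma xr_props:
  assumes k: "1 \<le> \<kappa>" and n: "2 \<le> n" and r: "r < \<kappa> * length (inc_tuples n \<kappa>)"
  shows "profile n \<kappa> (xr n \<kappa> r)" "Bfun n \<kappa> r (xr n \<kappa> r) = 1"
proof -
  define z where "z = inc_tuples n \<kappa> ! (r div \<kappa>)"
  have rl: "r div \<kappa> < length (inc_tuples n \<kappa>)" using rdiv_lt[OF r] .
  have zl: "length z = n - 1" and zs: "set z \<subseteq> {1..\<kappa>}" and zd: "sorted_wrt (<) z"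
    using T_nth[OF rl] unfolding z_def by auto
  have dz: "distinct z" using zd strict_sorted_iff by blast
  show "profile n \<kappa> (xr n \<kappa> r)"
    unfolding profile_def
  proof
    fix t assume t: "t \<in> {1..n}"
    show "xr n \<kappa> r t \<in> {1..\<kappa>}"
    proof (cases "t = 1")
      case True
      have "r mod \<kappa> < \<kappa>" using k by simp
      then show ?thesis using True by (simp add: xr_def)
    next
      case False
      then have "t - 2 < length z" using t zl by auto
      then have "z ! (t - 2) \<in> set z" by simp
      then show ?thesis using False zs by (auto simp: xr_def z_def)
    qed
  qed
  have "tmatch z (xr n \<kappa> r) id n" unfolding tmatch_def xr_def z_def by auto
  then show "Bfun n \<kappa> r (xr n \<kappa> r) = 1"
    unfolding Bfun_def z_def[symmetric] using Bv_match[OF dz zl permutes_id] by (simp add: xr_def)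
qed

lemma Bfun_unique:
  assumes k: "1 \<le> \<kappa>" and r: "r < \<kappa> * length (inc_tuples n \<kappa>)" and r': "r' < \<kappa> * length (inc_tuples n \<kappa>)"
    and b: "Bfun n \<kappa> r x \<noteq> 0" and b': "Bfun n \<kappa> r' x \<noteq> 0"
  shows "r = r'"
proof -
  define T where "T = inc_tuples n \<kappa>"
  have rl: "r div \<kappa> < length T" "r' div \<kappa> < length T" using rdiv_lt[OF r] rdiv_lt[OF r'] unfolding T_def by auto
  have m1: "x 1 = r mod \<kappa> + 1" "x 1 = r' mod \<kappa> + 1"
    using Bv_nonzero(1) b b' unfolding Bfun_def by blast+
  obtain \<sigma> where s: "\<sigma> permutes {1..n-1}" "tmatch (T ! (r div \<kappa>)) x \<sigma> n"
    using Bv_nonzero(2) b unfolding Bfun_def T_def by blast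
  obtain \<sigma>' where s': "\<sigma>' permutes {1..n-1}" "tmatch (T ! (r' div \<kappa>)) x \<sigma>' n"
    using Bv_nonzero(2) b' unfolding Bfun_def T_def by blast
  have l: "length (T ! (r div \<kappa>)) = n - 1" "length (T ! (r' div \<kappa>)) = n - 1"
    "sorted_wrt (<) (T ! (r div \<kappa>))" "sorted_wrt (<) (T ! (r' div \<kappa>))"
    using T_nth rl unfolding T_def by auto
  have "set (T ! (r div \<kappa>)) = set (T ! (r' div \<kappa>))"
    using tmatch_set[OF l(1) s] tmatch_set[OF l(2) s'] by simp
  then have "T ! (r div \<kappa>) = T ! (r' div \<kappa>)" using strict_sorted_equal[OF l(4) l(3)] by simp
  then have "r div \<kappa> = r' div \<kappa>" using nth_eq_iff_index_eq[OF distinct_T[of n \<kappa>, folded T_def] rl] by simp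
  moreover have "r mod \<kappa> = r' mod \<kappa>" using m1 by simp
  ultimately show "r = r'" by (metis div_mult_mod_eq)
qed

lemma sum_single:
  assumes k: "1 \<le> \<kappa>" and r0: "r0 < \<kappa> * length (inc_tuples n \<kappa>)" and b: "Bfun n \<kappa> r0 x \<noteq> 0"
  shows "(\<Sum>r<\<kappa> * length (inc_tuples n \<kappa>). f r * Bfun n \<kappa> r x) = f r0 * Bfun n \<kappa> r0 x"
proof -
  have "(\<Sum>r<\<kappa> * length (inc_tuples n \<kappa>). f r * Bfun n \<kappa> r x) =
     (\<Sum>r<\<kappa> * length (inc_tuples n \<kappa>). if r = r0 then f r0 * Bfun n \<kappa> r0 x else 0)"
  proof (rule sum.cong[OF refl])
    fix r assume "r \<in> {..<\<kappa> * length (inc_tuples n \<kappa>)}"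
    then have "r < \<kappa> * length (inc_tuples n \<kappa>)" by simp
    then show "f r * Bfun n \<kappa> r x = (if r = r0 then f r0 * Bfun n \<kappa> r0 x else 0)"
      using Bfun_unique[OF k _ r0 _ b] by (cases "r = r0") auto
  qed
  also have "\<dots> = f r0 * Bfun n \<kappa> r0 x" using r0 by simp
  finally show ?thesis .
qed

lemma expansion:
  assumes k: "1 \<le> \<kappa>" and n: "2 \<le> n" and G: "alt n \<kappa> G" and x: "profile n \<kappa> x"
  shows "G x = (\<Sum>r<\<kappa> * length (inc_tuples n \<kappa>). G (xr n \<kappa> r) * Bfun n \<kappa> r x)"
proof (cases "inj_on x {2..n}")
  case True
  define zs where "zs = sorted_list_of_set (x ` {2..n})"
  have zS: "zs \<in> Sset n \<kappa>" and "\<exists>\<sigma>. \<sigma> permutes {1..n-1} \<and> tmatch zs x \<sigma> n"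
    using tmatch_exists[OF n x True] unfolding zs_def by auto
  then obtain \<sigma>0 where s0: "\<sigma>0 permutes {1..n-1}" "tmatch zs x \<sigma>0 n" by blast
  have "zs \<in> set (inc_tuples n \<kappa>)" using zS set_T by simp
  then obtain i0 where i0: "i0 < length (inc_tuples n \<kappa>)" "inc_tuples n \<kappa> ! i0 = zs"
    by (auto simp: in_set_conv_nth)
  have x1: "1 \<le> x 1" "x 1 \<le> \<kappa>" using x n unfolding profile_def by auto
  define r0 where "r0 = i0 * \<kappa> + (x 1 - 1)"
  have x1l: "x 1 - 1 < \<kappa>" using x1 by simp
  have r0m: "r0 mod \<kappa> = x 1 - 1" "r0 div \<kappa> = i0" unfolding r0_def using divmod_aux[OF x1l] by auto
  have r0l: "r0 < \<kappa> * length (inc_tuples n \<kappa>)"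
  proof -
    have "r0 < i0 * \<kappa> + \<kappa>" using x1 unfolding r0_def by linarith
    also have "\<dots> = (i0 + 1) * \<kappa>" by simp
    also have "\<dots> \<le> length (inc_tuples n \<kappa>) * \<kappa>" using i0(1) by (intro mult_right_mono) auto
    finally show ?thesis by (simp add: mult.commute)
  qed
  have zl: "length zs = n - 1" and zd: "distinct zs" using zS by (auto simp: Sset_def strict_sorted_iff)
  have bf: "Bfun n \<kappa> r0 x = of_int (sign \<sigma>0)"
    unfolding Bfun_def r0m i0(2) Bv_match[OF zd zl s0] using x1 by simp
  then have bf0: "Bfun n \<kappa> r0 x \<noteq> 0" by simp
  define \<pi> where "\<pi> = (\<lambda>t. if t \<in> {2..n} then Suc (\<sigma>0 (t - 1)) else t)"
  have p: "\<pi> permutes {1..n}" "\<pi> 1 = 1" "sign \<pi> = sign \<sigma>0" using unshift_perm[OF s0(1)] unfolding \<pi>_def by auto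
  have agree: "\<forall>t\<in>{1..n}. (xr n \<kappa> r0 \<circ> \<pi>) t = x t"
  proof
    fix t assume t: "t \<in> {1..n}"
    show "(xr n \<kappa> r0 \<circ> \<pi>) t = x t"
    proof (cases "t = 1")
      case True
      then show ?thesis using p(2) x1 r0m by (simp add: xr_def)
    next
      case False
      then have t2: "t \<in> {2..n}" "t - 1 \<in> {1..<n}" "t - 1 \<in> {1..n-1}" using t by auto
      have "\<sigma>0 (t-1) \<in> {1..n-1}" using permutes_in_image[OF s0(1)] t2(3) by blast
      then have s1: "\<sigma>0 (t-1) \<ge> 1" by simp
      have "(xr n \<kappa> r0 \<circ> \<pi>) t = zs ! (\<sigma>0 (t-1) - 1)"
        using t2 s1 r0m i0 by (simp add: \<pi>_def xr_def)
      also have "\<dots> = x (Suc (t-1))" using s0(2) t2(2) unfolding tmatch_def by auto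
      also have "Suc (t - 1) = t" using t2 by auto
      finally show ?thesis .
    qed
  qed
  have pr: "profile n \<kappa> (xr n \<kappa> r0)" using xr_props(1)[OF k n r0l] .
  have "G x = G (xr n \<kappa> r0 \<circ> \<pi>)" using G agree unfolding alt_def by metis
  also have "\<dots> = of_int (sign \<pi>) * G (xr n \<kappa> r0)" using G p pr unfolding alt_def by blast
  also have "\<dots> = G (xr n \<kappa> r0) * Bfun n \<kappa> r0 x" using bf p(3) by simp
  also have "\<dots> = (\<Sum>r<\<kappa> * length (inc_tuples n \<kappa>). G (xr n \<kappa> r) * Bfun n \<kappa> r x)"
    using sum_single[OF k r0l bf0] by simp
  finally show ?thesis .
next
  case False
  then obtain a b where ab: "a \<in> {2..n}" "b \<in> {2..n}" "a \<noteq> b" "x a = x b"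
    unfolding inj_on_def by blast
  define \<tau> where "\<tau> = Transposition.transpose a b"
  have tp: "\<tau> permutes {1..n}" unfolding \<tau>_def using ab by (intro permutes_swap_id) auto
  have t1: "\<tau> 1 = 1" unfolding \<tau>_def using ab by auto
  have ts: "sign \<tau> = -1" unfolding \<tau>_def using ab by (simp add: sign_swap_id)
  have xt: "x \<circ> \<tau> = x" unfolding \<tau>_def using ab by (auto simp: fun_eq_iff Transposition.transpose_def)
  have "G x = of_int (sign \<tau>) * G x" using G tp t1 x xt unfolding alt_def by metis
  then have G0: "G x = 0" using ts by simp
  have "Bfun n \<kappa> r x = 0" if r: "r \<in> {..<\<kappa> * length (inc_tuples n \<kappa>)}" for r
  proof (rule ccontr)
    assume "Bfun n \<kappa> r x \<noteq> 0"
    then obtain \<sigma> where s: "\<sigma> permutes {1..n-1}" "tmatch (inc_tuples n \<kappa> ! (r div \<kappa>)) x \<sigma> n"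
      using Bv_nonzero(2) unfolding Bfun_def by blast
    have rl: "r div \<kappa> < length (inc_tuples n \<kappa>)" using rdiv_lt r by simp
    have "length (inc_tuples n \<kappa> ! (r div \<kappa>)) = n - 1" "distinct (inc_tuples n \<kappa> ! (r div \<kappa>))"
      using T_nth[OF rl] strict_sorted_iff by auto
    then have "inj_on x {2..n}" using tmatch_inj s by blast
    then show False using False by simp
  qed
  then show ?thesis using G0 by simp
qed


section \<open>Skew-symmetry via F\<close>

definition Fv :: "nat \<Rightarrow> nat \<Rightarrow> real vec \<Rightarrow> nat \<Rightarrow> (nat \<Rightarrow> nat) \<Rightarrow> real" where
  "Fv n \<kappa> v i x = v $ ((i - 1) * \<kappa>^n + encr \<kappa> x 1 (n+1))"

lemma profile_bounds:
  assumes "profile n \<kappa> x"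
  shows "\<And>t. t \<in> {1..<n+1} \<Longrightarrow> 1 \<le> x t \<and> x t \<le> \<kappa>"
  using assms unfolding profile_def by auto

lemma encr_profile_lt:
  assumes "profile n \<kappa> x"
  shows "encr \<kappa> x 1 (n+1) < \<kappa>^n"
  using encr_lt[of 1 "n+1" x \<kappa>] profile_bounds[OF assms] by simp

lemma payoff_eq:
  assumes x: "profile n \<kappa> x"
  shows "payoff n \<kappa> v i x = Fv n \<kappa> v i x"
proof -
  have kl: "kron_list (map (\<lambda>t. delta \<kappa> (x t)) [1..<n+1]) = unit_vec (\<kappa>^n) (encr \<kappa> x 1 (n+1))"
    using kron_list_deltas[of 1 "n+1" x \<kappa>] profile_bounds[OF x] by simp
  have lt: "encr \<kappa> x 1 (n+1) < \<kappa>^n" using encr_profile_lt[OF x] .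
  have "payoff n \<kappa> v i x = (\<Sum>col<\<kappa>^n. if col = encr \<kappa> x 1 (n+1) then v $ ((i - 1) * \<kappa> ^ n + col) else 0)"
    unfolding payoff_def kl by (intro sum.cong refl) (simp add: unit_vec_index)
  also have "\<dots> = Fv n \<kappa> v i x" using lt by (simp add: Fv_def)
  finally show ?thesis .
qed

lemma Fv_cong:
  assumes "\<forall>t\<in>{1..n}. x t = y t"
  shows "Fv n \<kappa> v i x = Fv n \<kappa> v i y"
proof -
  have "encr \<kappa> x 1 (n+1) = encr \<kappa> y 1 (n+1)" using assms by (intro encr_cong) auto
  then show ?thesis by (simp add: Fv_def)
qed

lemma skew_iff:
  "skew_symmetric_game n \<kappa> v \<longleftrightarrow>
     (\<forall>\<sigma>. \<sigma> permutes {1..n} \<longrightarrow> (\<forall>i \<in> {1..n}. \<forall>x. profile n \<kappa> x \<longrightarrow>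
        Fv n \<kappa> v i x = of_int (sign \<sigma>) * Fv n \<kappa> v (\<sigma> i) (x \<circ> Hilbert_Choice.inv \<sigma>)))"
proof -
  have "payoff n \<kappa> v (\<sigma> i) (\<lambda>t. x (Hilbert_Choice.inv \<sigma> t)) = Fv n \<kappa> v (\<sigma> i) (x \<circ> Hilbert_Choice.inv \<sigma>)"
    if "\<sigma> permutes {1..n}" "profile n \<kappa> x" for \<sigma> x i
    using payoff_eq[OF profile_comp[OF that(2) permutes_inv[OF that(1)]]] by (simp add: comp_def)
  then show ?thesis unfolding skew_symmetric_game_def using payoff_eq by auto
qed

lemma skew_alt:
  assumes sk: "skew_symmetric_game n \<kappa> v"
  shows "alt n \<kappa> (Fv n \<kappa> v 1)"
  unfolding alt_def
proof (intro conjI allI impI)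
  fix x y :: "nat \<Rightarrow> nat" assume "\<forall>t\<in>{1..n}. x t = y t"
  then show "Fv n \<kappa> v 1 x = Fv n \<kappa> v 1 y" by (rule Fv_cong)
next
  fix \<pi> x assume p: "\<pi> permutes {1..n}" "\<pi> 1 = 1" and x: "profile n \<kappa> x"
  show "Fv n \<kappa> v 1 (x \<circ> \<pi>) = of_int (sign \<pi>) * Fv n \<kappa> v 1 x"
  proof (cases "n = 0")
    case True
    then show ?thesis using p by (simp add: permutes_empty)
  next
    case False
    then have "1 \<in> {1..n}" by simp
    then have "Fv n \<kappa> v 1 (x \<circ> \<pi>) = of_int (sign \<pi>) * Fv n \<kappa> v (\<pi> 1) (x \<circ> \<pi> \<circ> Hilbert_Choice.inv \<pi>)"
      using sk p profile_comp[OF x p(1)] unfolding skew_iff by blast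
    also have "x \<circ> \<pi> \<circ> Hilbert_Choice.inv \<pi> = x"
      using permutes_inv_o(1)[OF p(1)] by (simp add: comp_assoc)
    finally show ?thesis using p(2) by (simp add: comp_def)
  qed
qed

lemma skew_transp:
  assumes sk: "skew_symmetric_game n \<kappa> v" and i: "i \<in> {2..n}" and x: "profile n \<kappa> x"
  shows "Fv n \<kappa> v i x = - Fv n \<kappa> v 1 (x \<circ> Transposition.transpose 1 i)"
proof -
  define \<tau> where "\<tau> = Transposition.transpose (1::nat) i"
  have tp: "\<tau> permutes {1..n}" unfolding \<tau>_def using i by (intro permutes_swap_id) auto
  have ts: "sign \<tau> = -1" unfolding \<tau>_def using i by (simp add: sign_swap_id)
  have ti: "Hilbert_Choice.inv \<tau> = \<tau>" unfolding \<tau>_def by simp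
  have tt: "\<tau> \<circ> \<tau> = id" unfolding \<tau>_def by simp
  have t1: "\<tau> 1 = i" unfolding \<tau>_def by simp
  have one: "1 \<in> {1..n}" using i by simp
  have "Fv n \<kappa> v 1 (x \<circ> \<tau>) = of_int (sign \<tau>) * Fv n \<kappa> v (\<tau> 1) (x \<circ> \<tau> \<circ> Hilbert_Choice.inv \<tau>)"
    using sk tp profile_comp[OF x tp] one unfolding skew_iff by blast
  also have "x \<circ> \<tau> \<circ> Hilbert_Choice.inv \<tau> = x" unfolding ti comp_assoc tt by simp
  finally have "Fv n \<kappa> v 1 (x \<circ> \<tau>) = - Fv n \<kappa> v i x" unfolding ts t1 by (simp add: comp_def)
  then show ?thesis unfolding \<tau>_def by simp
qed


lemma alt_to_skew:
  assumes G: "alt n \<kappa> G"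
    and F: "\<And>i x. i \<in> {1..n} \<Longrightarrow> profile n \<kappa> x \<Longrightarrow>
        Fv n \<kappa> v i x = (if i = 1 then G x else - G (x \<circ> Transposition.transpose 1 i))"
  shows "skew_symmetric_game n \<kappa> v"
proof -
  define \<rho> where "\<rho> = (\<lambda>i::nat. if i = 1 then id else Transposition.transpose 1 i)"
  have \<rho>p: "\<rho> i permutes {1..n}" if "i \<in> {1..n}" for i
    unfolding \<rho>_def using that by (auto intro: permutes_swap_id)
  have \<rho>1: "\<rho> i 1 = i" for i unfolding \<rho>_def by simp
  have \<rho>i: "\<rho> i i = 1" for i unfolding \<rho>_def by simp
  have \<rho>\<rho>: "\<rho> i \<circ> \<rho> i = id" for i unfolding \<rho>_def by simp
  have \<rho>perm: "permutation (\<rho> i)" for i unfolding \<rho>_def by (simp add: permutation_swap_id)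
  have Fr: "Fv n \<kappa> v i x = of_int (sign (\<rho> i)) * G (x \<circ> \<rho> i)" if "i \<in> {1..n}" "profile n \<kappa> x" for i x
    using F[OF that] unfolding \<rho>_def by (simp add: sign_swap_id)
  have claim: "of_int (sign (\<rho> i)) * G (x \<circ> \<rho> i) = of_int (sign \<rho>0) * G (x \<circ> \<rho>0)"
    if i: "i \<in> {1..n}" and r0: "\<rho>0 permutes {1..n}" "\<rho>0 1 = i" and x: "profile n \<kappa> x" for i \<rho>0 x
  proof -
    define \<pi> where "\<pi> = \<rho> i \<circ> \<rho>0"
    have pp: "\<pi> permutes {1..n}" unfolding \<pi>_def using permutes_compose[OF r0(1) \<rho>p[OF i]] .
    have p1: "\<pi> 1 = 1" unfolding \<pi>_def using r0(2) \<rho>i by simp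
    have r0e: "\<rho>0 = \<rho> i \<circ> \<pi>" unfolding \<pi>_def comp_assoc[symmetric] \<rho>\<rho> by simp
    have sg: "sign \<rho>0 = sign (\<rho> i) * sign \<pi>"
      unfolding r0e using sign_compose[OF \<rho>perm permutes_imp_permutation[OF _ pp]] by simp
    have xr: "profile n \<kappa> (x \<circ> \<rho> i)" using profile_comp[OF x \<rho>p[OF i]] .
    have "G (x \<circ> \<rho>0) = G ((x \<circ> \<rho> i) \<circ> \<pi>)" unfolding r0e by (simp add: comp_assoc)
    also have "\<dots> = of_int (sign \<pi>) * G (x \<circ> \<rho> i)" using G pp p1 xr unfolding alt_def by blast
    finally have e: "G (x \<circ> \<rho>0) = of_int (sign \<pi>) * G (x \<circ> \<rho> i)" .
    have ss: "real_of_int (sign \<pi>) * real_of_int (sign \<pi>) = 1" by (metis of_int_1 of_int_mult sign_idempotent)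
    have "of_int (sign \<rho>0) * G (x \<circ> \<rho>0) = of_int (sign (\<rho> i)) * (real_of_int (sign \<pi>) * real_of_int (sign \<pi>)) * G (x \<circ> \<rho> i)"
      unfolding e sg by (simp add: algebra_simps)
    then show ?thesis unfolding ss by simp
  qed
  show ?thesis unfolding skew_iff
  proof (intro allI impI ballI)
    fix \<sigma> i x assume s: "\<sigma> permutes {1..n}" and i: "i \<in> {1..n}" and x: "profile n \<kappa> x"
    have si: "\<sigma> i \<in> {1..n}" using permutes_in_image[OF s] i by blast
    define y where "y = x \<circ> Hilbert_Choice.inv \<sigma>"
    have y: "profile n \<kappa> y" unfolding y_def using profile_comp[OF x permutes_inv[OF s]] .
    have sp: "\<sigma> \<circ> \<rho> i permutes {1..n}" using permutes_compose[OF \<rho>p[OF i] s] .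
    have s1: "(\<sigma> \<circ> \<rho> i) 1 = \<sigma> i" using \<rho>1 by simp
    have "Fv n \<kappa> v (\<sigma> i) y = of_int (sign (\<rho> (\<sigma> i))) * G (y \<circ> \<rho> (\<sigma> i))" using Fr[OF si y] .
    also have "\<dots> = of_int (sign (\<sigma> \<circ> \<rho> i)) * G (y \<circ> (\<sigma> \<circ> \<rho> i))" using claim[OF si sp s1 y] .
    also have "y \<circ> (\<sigma> \<circ> \<rho> i) = x \<circ> \<rho> i"
    proof -
      have "y \<circ> (\<sigma> \<circ> \<rho> i) = x \<circ> (Hilbert_Choice.inv \<sigma> \<circ> \<sigma>) \<circ> \<rho> i" unfolding y_def by (simp only: comp_assoc)
      then show ?thesis using permutes_inv_o(2)[OF s] by simp
    qed
    also have "sign (\<sigma> \<circ> \<rho> i) = sign \<sigma> * sign (\<rho> i)"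
      using sign_compose[OF permutes_imp_permutation[OF _ s] \<rho>perm] by simp
    finally have e: "Fv n \<kappa> v (\<sigma> i) y = of_int (sign \<sigma> * sign (\<rho> i)) * G (x \<circ> \<rho> i)" .
    have ss: "real_of_int (sign \<sigma>) * real_of_int (sign \<sigma>) = 1" by (metis of_int_1 of_int_mult sign_idempotent)
    have "of_int (sign \<sigma>) * Fv n \<kappa> v (\<sigma> i) y = (real_of_int (sign \<sigma>) * real_of_int (sign \<sigma>)) * (of_int (sign (\<rho> i)) * G (x \<circ> \<rho> i))"
      unfolding e by (simp only: of_int_mult mult.assoc)
    also have "\<dots> = Fv n \<kappa> v i x" unfolding ss using Fr[OF i x] by simp
    finally show "Fv n \<kappa> v i x = of_int (sign \<sigma>) * Fv n \<kappa> v (\<sigma> i) (x \<circ> Hilbert_Choice.inv \<sigma>)"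
      unfolding y_def by simp
  qed
qed

lemma alt_lincomb:
  assumes "\<And>r. r \<in> S \<Longrightarrow> alt n \<kappa> (g r)"
  shows "alt n \<kappa> (\<lambda>x. \<Sum>r\<in>S. c r * g r x)"
  unfolding alt_def
proof (intro conjI allI impI)
  fix \<pi> x assume p: "\<pi> permutes {1..n}" "\<pi> 1 = 1" and x: "profile n \<kappa> x"
  have "(\<Sum>r\<in>S. c r * g r (x \<circ> \<pi>)) = (\<Sum>r\<in>S. of_int (sign \<pi>) * (c r * g r x))"
    using assms p x unfolding alt_def by (intro sum.cong) auto
  then show "(\<Sum>r\<in>S. c r * g r (x \<circ> \<pi>)) = of_int (sign \<pi>) * (\<Sum>r\<in>S. c r * g r x)"
    by (simp add: sum_distrib_left)
next
  fix x y :: "nat \<Rightarrow> nat" assume "\<forall>t\<in>{1..n}. x t = y t"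
  then show "(\<Sum>r\<in>S. c r * g r x) = (\<Sum>r\<in>S. c r * g r y)"
    using assms unfolding alt_def by (intro sum.cong) auto
qed


lemma dim_D: "dim_row (D_mat n \<kappa>) = \<kappa> * length (inc_tuples n \<kappa>)" "dim_col (D_mat n \<kappa>) = n * \<kappa>^n"
proof -
  have "dim_row (B_mat n \<kappa>) = \<kappa> * length (inc_tuples n \<kappa>)" using B_carrier[of n \<kappa>] by blast
  then show "dim_row (D_mat n \<kappa>) = \<kappa> * length (inc_tuples n \<kappa>)" unfolding D_mat_def by simp
  show "dim_col (D_mat n \<kappa>) = n * \<kappa>^n" unfolding D_mat_def by simp
qed

lemma profile_bnd:
  assumes "profile n \<kappa> x"
  shows "\<And>t. t \<in> {1..n} \<Longrightarrow> 1 \<le> x t \<and> x t \<le> \<kappa>"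
  using assms unfolding profile_def by auto

lemma Fv_lincomb:
  assumes k: "1 \<le> \<kappa>" and n: "2 \<le> n" and i: "i \<in> {1..n}" and x: "profile n \<kappa> x"
  shows "Fv n \<kappa> (lincomb_rows (D_mat n \<kappa>) c) i x =
    (if i = 1 then (\<Sum>r<\<kappa> * length (inc_tuples n \<kappa>). c r * Bfun n \<kappa> r x)
     else - (\<Sum>r<\<kappa> * length (inc_tuples n \<kappa>). c r * Bfun n \<kappa> r (x \<circ> Transposition.transpose 1 i)))"
proof -
  define N where "N = \<kappa>^n"
  define e where "e = encr \<kappa> x 1 (n+1)"
  define R where "R = \<kappa> * length (inc_tuples n \<kappa>)"
  have eN: "e < N" unfolding e_def N_def using encr_profile_lt[OF x] .
  define idx where "idx = (i - 1) * N + e"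
  have "idx < (i - 1) * N + N" unfolding idx_def using eN by simp
  also have "\<dots> = i * N" using i by (cases i) auto
  also have "\<dots> \<le> n * N" using i by (intro mult_right_mono) auto
  finally have idxl: "idx < n * N" .
  have dm: "idx div N = i - 1" "idx mod N = e" unfolding idx_def using divmod_aux[OF eN] by (auto simp: add.commute)
  have rowB: "dim_row (B_mat n \<kappa>) = R" unfolding R_def using B_carrier[of n \<kappa>] by blast
  have "Fv n \<kappa> (lincomb_rows (D_mat n \<kappa>) c) i x = lincomb_rows (D_mat n \<kappa>) c $ idx"
    unfolding Fv_def idx_def e_def N_def ..
  also have "\<dots> = (\<Sum>r<R. c r * D_block n \<kappa> (i - 1) $$ (r, e))"
  proof -
    have "lincomb_rows (D_mat n \<kappa>) c $ idx = (\<Sum>r<R. c r * D_mat n \<kappa> $$ (r, idx))"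
      unfolding lincomb_rows_def using idxl dim_D[of n \<kappa>] unfolding R_def N_def by simp
    also have "\<dots> = (\<Sum>r<R. c r * D_block n \<kappa> (i - 1) $$ (r, e))"
    proof (rule sum.cong[OF refl])
      fix r assume "r \<in> {..<R}"
      then have "r < dim_row (B_mat n \<kappa>)" using rowB by simp
      then show "c r * D_mat n \<kappa> $$ (r, idx) = c r * D_block n \<kappa> (i - 1) $$ (r, e)"
        unfolding D_mat_def using idxl dm unfolding N_def by simp
    qed
    finally show ?thesis .
  qed
  also have "\<dots> = (if i = 1 then (\<Sum>r<R. c r * Bfun n \<kappa> r x)
     else - (\<Sum>r<R. c r * Bfun n \<kappa> r (x \<circ> Transposition.transpose 1 i)))"
  proof (cases "i = 1")
    case True
    have "D_block n \<kappa> 0 $$ (r, e) = Bfun n \<kappa> r x" if "r < R" for r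
      unfolding D_block_def Bfun_def e_def using B_entry[OF k _ that[unfolded R_def] profile_bnd[OF x]] n by simp
    then show ?thesis using True by simp
  next
    case False
    define \<tau> where "\<tau> = Transposition.transpose (1::nat) i"
    have tp: "\<tau> permutes {1..n}" unfolding \<tau>_def using i by (intro permutes_swap_id) auto
    have xt: "profile n \<kappa> (x \<circ> \<tau>)" using profile_comp[OF x tp] .
    have b: "1 \<le> i - 1" "i - 1 < n" using i False by auto
    have "D_block n \<kappa> (i - 1) $$ (r, e) = - Bfun n \<kappa> r (x \<circ> \<tau>)" if "r < R" for r
    proof -
      have r: "r < dim_row (B_mat n \<kappa>)" using that rowB by simp
      have "D_block n \<kappa> (i - 1) $$ (r, e) = - B_mat n \<kappa> $$ (r, encr \<kappa> (x \<circ> \<tau>) 1 (n+1))"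
        unfolding e_def \<tau>_def using D_block_profile[OF k b r profile_bnd[OF x]] b by simp
      also have "\<dots> = - Bfun n \<kappa> r (x \<circ> \<tau>)"
      proof -
        have bb: "\<And>t. t \<in> {1..n} \<Longrightarrow> 1 \<le> (x \<circ> \<tau>) t \<and> (x \<circ> \<tau>) t \<le> \<kappa>" using profile_bnd[OF xt] .
        have n1: "1 \<le> n" using n by simp
        have "B_mat n \<kappa> $$ (r, encr \<kappa> (x \<circ> \<tau>) 1 (n+1)) = Bv n (inc_tuples n \<kappa> ! (r div \<kappa>)) (r mod \<kappa> + 1) (x \<circ> \<tau>)"
          by (rule B_entry[OF k n1 that[unfolded R_def] bb])
        then show ?thesis unfolding Bfun_def by simp
      qed
      finally show ?thesis .
    qed
    then have "(\<Sum>r<R. c r * D_block n \<kappa> (i - 1) $$ (r, e)) = (\<Sum>r<R. - (c r * Bfun n \<kappa> r (x \<circ> \<tau>)))"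
      by (intro sum.cong) auto
    then show ?thesis using False unfolding \<tau>_def by (simp add: sum_negf)
  qed
  finally show ?thesis unfolding R_def .
qed

theorem theorem4p5:
  fixes n \<kappa> :: nat
  assumes "2 \<le> n" and "n \<le> \<kappa> + 1"
  shows "D_mat n \<kappa> \<in> carrier_mat (\<kappa> * (\<kappa> choose (n - 1))) (n * \<kappa> ^ n)
     \<and> rows_form_basis (D_mat n \<kappa>) (skew_space n \<kappa>)"
proof -
  note n = assms(1)
  have k: "1 \<le> \<kappa>" using assms by simp
  define R where "R = \<kappa> * length (inc_tuples n \<kappa>)"
  define Gc where "Gc = (\<lambda>c x. \<Sum>r<R. c r * Bfun n \<kappa> r x)"
  have dR: "dim_row (D_mat n \<kappa>) = R" unfolding R_def by (rule dim_D)
  have dC: "dim_col (D_mat n \<kappa>) = n * \<kappa>^n" by (rule dim_D)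
  have FL: "Fv n \<kappa> (lincomb_rows (D_mat n \<kappa>) c) i x =
      (if i = 1 then Gc c x else - Gc c (x \<circ> Transposition.transpose 1 i))"
    if "i \<in> {1..n}" "profile n \<kappa> x" for c i x
    using Fv_lincomb[OF k n that] unfolding Gc_def R_def .
  have dimL: "dim_vec (lincomb_rows (D_mat n \<kappa>) c) = n * \<kappa>^n" for c
    unfolding lincomb_rows_def dC by simp
  have altB: "alt n \<kappa> (Bfun n \<kappa> r)" if "r \<in> {..<R}" for r
  proof -
    have rl: "r div \<kappa> < length (inc_tuples n \<kappa>)" using that rdiv_lt unfolding R_def by simp
    have "length (inc_tuples n \<kappa> ! (r div \<kappa>)) = n - 1" "distinct (inc_tuples n \<kappa> ! (r div \<kappa>))"
      using T_nth[OF rl] strict_sorted_iff by auto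
    then show ?thesis unfolding Bfun_def using Bv_alt n by blast
  qed
  have altG: "alt n \<kappa> (Gc c)" for c
    unfolding Gc_def by (rule alt_lincomb) (rule altB)
  have carrier: "D_mat n \<kappa> \<in> carrier_mat (\<kappa> * (\<kappa> choose (n - 1))) (n * \<kappa> ^ n)"
  proof (rule carrier_matI)
      show "dim_row (D_mat n \<kappa>) = \<kappa> * (\<kappa> choose (n - 1))" using dR unfolding R_def length_T .
      show "dim_col (D_mat n \<kappa>) = n * \<kappa> ^ n" using dC .
    qed
  have indep: "\<forall>c. lincomb_rows (D_mat n \<kappa>) c = 0\<^sub>v (dim_col (D_mat n \<kappa>)) \<longrightarrow> (\<forall>r < dim_row (D_mat n \<kappa>). c r = 0)"
  proof (intro allI impI)
    fix c r assume z: "lincomb_rows (D_mat n \<kappa>) c = 0\<^sub>v (dim_col (D_mat n \<kappa>))" and r: "r < dim_row (D_mat n \<kappa>)"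
    have r': "r < \<kappa> * length (inc_tuples n \<kappa>)" using r dR unfolding R_def by simp
    define x0 where "x0 = xr n \<kappa> r"
    have p0: "profile n \<kappa> x0" and b1: "Bfun n \<kappa> r x0 = 1" using xr_props[OF k n r'] unfolding x0_def by auto
    have one: "1 \<in> {1..n}" using n by simp
    have "Fv n \<kappa> (lincomb_rows (D_mat n \<kappa>) c) 1 x0 = Gc c x0" using FL[OF one p0] by simp
    also have "\<dots> = c r" unfolding Gc_def R_def using sum_single[OF k r', of x0 c] b1 by simp
    finally have "c r = Fv n \<kappa> (0\<^sub>v (n * \<kappa>^n)) 1 x0" using z dC by simp
    also have "\<dots> = 0"
    proof -
      have "encr \<kappa> x0 1 (n+1) < 1 * \<kappa>^n" using encr_profile_lt[OF p0] by simp
      also have "\<dots> \<le> n * \<kappa>^n" using n by (intro mult_right_mono) auto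
      finally show ?thesis unfolding Fv_def by simp
    qed
    finally show "c r = 0" .
  qed
  have span: "skew_space n \<kappa> = {lincomb_rows (D_mat n \<kappa>) c | c. True}"
  proof
    show "{lincomb_rows (D_mat n \<kappa>) c | c. True} \<subseteq> skew_space n \<kappa>"
    proof
      fix w assume "w \<in> {lincomb_rows (D_mat n \<kappa>) c | c. True}"
      then obtain c where w: "w = lincomb_rows (D_mat n \<kappa>) c" by blast
      have "skew_symmetric_game n \<kappa> w"
        unfolding w by (rule alt_to_skew[OF altG FL])
      then show "w \<in> skew_space n \<kappa>" unfolding skew_space_def using dimL w by simp
    qed
    show "skew_space n \<kappa> \<subseteq> {lincomb_rows (D_mat n \<kappa>) c | c. True}"
    proof
      fix v assume "v \<in> skew_space n \<kappa>"
      then have dv: "dim_vec v = n * \<kappa>^n" and sk: "skew_symmetric_game n \<kappa> v"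
        unfolding skew_space_def by auto
      define c where "c = (\<lambda>r. Fv n \<kappa> v 1 (xr n \<kappa> r))"
      define w where "w = lincomb_rows (D_mat n \<kappa>) c"
      have altF: "alt n \<kappa> (Fv n \<kappa> v 1)" using skew_alt[OF sk] .
      have exp: "Fv n \<kappa> v 1 y = Gc c y" if "profile n \<kappa> y" for y
        using expansion[OF k n altF that] unfolding Gc_def c_def R_def .
      have FF: "Fv n \<kappa> v i x = Fv n \<kappa> w i x" if i: "i \<in> {1..n}" and x: "profile n \<kappa> x" for i x
      proof (cases "i = 1")
        case True
        then show ?thesis using exp[OF x] FL[OF i x] unfolding w_def by simp
      next
        case False
        have tp: "Transposition.transpose 1 i permutes {1..n}" using i by (intro permutes_swap_id) auto
        have i2: "i \<in> {2..n}" using i False by auto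
        show ?thesis using skew_transp[OF sk i2 x] exp[OF profile_comp[OF x tp]] FL[OF i x] False
          unfolding w_def by simp
      qed
      have "v = w"
      proof (rule eq_vecI)
        show "dim_vec v = dim_vec w" unfolding w_def dimL dv ..
        fix idx assume "idx < dim_vec w"
        then have idx: "idx < n * \<kappa>^n" unfolding w_def dimL .
        define i where "i = idx div \<kappa>^n + 1"
        define e where "e = idx mod \<kappa>^n"
        have kn: "0 < \<kappa>^n" using k by simp
        have i: "i \<in> {1..n}" unfolding i_def using idx less_mult_imp_div_less[of idx n "\<kappa>^n"] by auto
        have eN: "e < \<kappa>^(n+1-1)" unfolding e_def using kn by simp
        obtain x where xb: "\<forall>t. 1 \<le> x t \<and> x t \<le> \<kappa>" and xe: "encr \<kappa> x 1 (n+1) = e"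
          using encr_surj[OF k _ eN] by auto
        have x: "profile n \<kappa> x" using xb unfolding profile_def by auto
        have ie: "idx = (i - 1) * \<kappa>^n + encr \<kappa> x 1 (n+1)" unfolding xe i_def e_def using div_mult_mod_eq[of idx "\<kappa>^n"] by simp
        show "v $ idx = w $ idx" using FF[OF i x] unfolding Fv_def ie[symmetric] .
      qed
      then show "v \<in> {lincomb_rows (D_mat n \<kappa>) c | c. True}" unfolding w_def by blast
    qed
  qed
  show ?thesis using carrier indep span unfolding rows_form_basis_def by blast
qed

end
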